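(* Consider the setting and SCSG algorithm described in the context, with $\hat A$ nonsingular and $\hat C$ positive definite. Set $\sigma_\theta=\frac{\lambda_{\min}}{6\kappa(Q)^2L_G^2}$, $\beta=\frac{8\lambda_{\max}(\hat A^\top\hat C^{-1}\hat A)}{\lambda_{\min}(\hat C)}$ and $\sigma_\omega=\beta\sigma_\theta$, and choose the batch size $B\ge\frac{4}{\sigma_\theta\lambda_{\min}}$, so that $\frac{4}{3B\sigma_\theta\lambda_{\min}}+\frac13\le\frac23<1$. Assume the dataset size is large, $n\gg B$ (in particular $B<n$). Then after $M$ epochs the primal iterate $\theta_M$ satisfies $$\mathbb{E}\|\theta_M-\theta^\star\|^2\le\left(\frac{4}{3B\sigma_\theta\lambda_{\min}}+\frac13\right)^M\kappa(Q)^2\,\mathbb{E}\|\Delta_0\|^2+\frac{3\sigma_\theta\kappa(Q)^2\mathcal H}{\lambda_{\min}(B\sigma_\theta\lambda_{\min}-2)} .$$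
   Context: Data: $n$ transitions $(s_t,a_t,r_t,s_{t+1})$, $t\in[n]=\{1,\dots,n\}$, a feature map $\phi$ from states to $\mathbb{R}^d$ and a discount factor $\gamma$. Define $\hat A_t=\phi(s_t)(\phi(s_t)-\gamma\phi(s_{t+1}))^\top$, $\hat b_t=r_t\phi(s_t)$, $\hat C_t=\phi(s_t)\phi(s_t)^\top$, and $\hat A,\hat b,\hat C$ their averages over $t\in[n]$. When $\hat A$ is nonsingular and $\hat C$ positive definite, the saddle-point problem $\min_\theta\max_\omega \langle \hat b-\hat A\theta,\omega\rangle-\frac12\omega^\top\hat C\omega$ has the unique solution $(\theta^\star,\omega^\star)=(\hat A^{-1}\hat b,0)$. With $\beta$ as in the claim, for $t\in[n]$ set $G_t=\begin{pmatrix}0&-\sqrt\beta\hat A_t^\top\\ \sqrt\beta\hat A_t&\beta\hat C_t\end{pmatrix}$, $g_t=\begin{pmatrix}0\\ \sqrt\beta\hat b_t\end{pmatrix}$, $G=\frac1n\sum_tG_t$, $g=\frac1n\sum_tg_t$, and $z^\star=(\theta^\star,\omega^\star/\sqrt\beta)$ (so $Gz^\star=g$). With this $\beta$, $G$ is diagonalizable with real positive eigenvalues; fix $G=Q\Lambda Q^{-1}$ with $\Lambda$ diagonal. $\lambda_{\min}$ is the smallest eigenvalue of $G$; $\|\cdot\|$ is the Euclidean/spectral norm; $\kappa(Q)=\|Q\|\|Q^{-1}\|$; $L_G^2=\left\|\frac1n\sum_tG_t^\top G_t\right\|$; the complexity measure is $\mathcal H=\frac1n\sum_{t=1}^n\|G_tz^\star-g_t\|^2$.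 SCSG (in coordinates $z=(\theta,\omega/\sqrt\beta)$, step sizes $\sigma_\theta$ for $\theta$ and $\sigma_\omega=\beta\sigma_\theta$ for $\omega$, fixed batch size $B$): the iterate at the start of epoch $m$ is $z_m$ (initial point $z_0$). A subset $\mathcal B\subseteq[n]$ of size $B$ is sampled uniformly at random, and $G_m=\frac1B\sum_{t\in\mathcal B}G_t$, $g_m=\frac1B\sum_{t\in\mathcal B}g_t$. A number of inner iterations $K_m\sim\mathrm{Geom}(\frac{B}{B+1})$ is drawn independently, where $N\sim\mathrm{Geom}(\gamma)$ means $P(N=k)=(1-\gamma)\gamma^k$ for $k=0,1,2,\dots$ (so $\mathbb E K_m=B$). Set $z_{m,0}=z_m$ and for $j=0,\dots,K_m-1$ sample $t_j$ uniformly from $[n]$ independently and set $z_{m,j+1}=z_{m,j}-\sigma_\theta\big(G_{t_j}z_{m,j}+(G_m-G_{t_j})z_m-g_m\big)$; then $z_{m+1}=z_{m,K_m}$. Write $z_M=(\theta_M,\cdot)$ and $\Delta_0=z_0-z^\star$. Expectations are over all randomness of the algorithm. *)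

theory Defs
  imports "HOL-Analysis.Analysis" "HOL-Probability.Probability"
begin

definition outer :: "real^'n \<Rightarrow> real^'n \<Rightarrow> real^'n^'n" where
  "outer u v = (\<chi> i j. u $ i * v $ j)"

definition spec_norm :: "real^'n^'m \<Rightarrow> real" where
  "spec_norm M = onorm (\<lambda>x. M *v x)"

definition real_eigenvalues :: "real^'n^'n \<Rightarrow> real set" where
  "real_eigenvalues M = {l. \<exists>v. v \<noteq> 0 \<and> M *v v = l *\<^sub>R v}"

definition lam_min :: "real^'n^'n \<Rightarrow> real" where
  "lam_min M = Min (real_eigenvalues M)"

definition lam_max :: "real^'n^'n \<Rightarrow> real" where
  "lam_max M = Max (real_eigenvalues M)"

definition cond_num :: "real^'n^'n \<Rightarrow> real" where
  "cond_num Q = spec_norm Q * spec_norm (matrix_inv Q)"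

definition pos_def :: "real^'n^'n \<Rightarrow> bool" where
  "pos_def C \<longleftrightarrow> (\<forall>x. x \<noteq> 0 \<longrightarrow> x \<bullet> (C *v x) > 0)"

definition diagonal_mat :: "real^'n^'n \<Rightarrow> bool" where
  "diagonal_mat L \<longleftrightarrow> (\<forall>i j. i \<noteq> j \<longrightarrow> L $ i $ j = 0)"

definition avg :: "nat \<Rightarrow> (nat \<Rightarrow> 'a::real_vector) \<Rightarrow> 'a" where
  "avg n f = (1 / real n) *\<^sub>R (\<Sum>t = 1..n. f t)"

definition A_t :: "('s \<Rightarrow> real^'d) \<Rightarrow> real \<Rightarrow> (nat \<Rightarrow> 's) \<Rightarrow> nat \<Rightarrow> real^'d^'d" where
  "A_t phi disc s t = outer (phi (s t)) (phi (s t) - disc *\<^sub>R phi (s (Suc t)))"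

definition b_t :: "('s \<Rightarrow> real^'d) \<Rightarrow> (nat \<Rightarrow> real) \<Rightarrow> (nat \<Rightarrow> 's) \<Rightarrow> nat \<Rightarrow> real^'d" where
  "b_t phi r s t = r t *\<^sub>R phi (s t)"

definition C_t :: "('s \<Rightarrow> real^'d) \<Rightarrow> (nat \<Rightarrow> 's) \<Rightarrow> nat \<Rightarrow> real^'d^'d" where
  "C_t phi s t = outer (phi (s t)) (phi (s t))"

section \<open>Coordinates z = (theta, omega / sqrt beta) in real^('d + 'd)\<close>

definition Gblk :: "real \<Rightarrow> real^'d^'d \<Rightarrow> real^'d^'d \<Rightarrow> real^('d + 'd)^('d + 'd)" where
  "Gblk beta A C = (\<chi> i j. (case i of
      Inl a \<Rightarrow> (case j of Inl c \<Rightarrow> 0 | Inr c \<Rightarrow> - sqrt beta * A $ c $ a)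
    | Inr a \<Rightarrow> (case j of Inl c \<Rightarrow> sqrt beta * A $ a $ c | Inr c \<Rightarrow> beta * C $ a $ c)))"

definition gblk :: "real \<Rightarrow> real^'d \<Rightarrow> real^('d + 'd)" where
  "gblk beta b = (\<chi> i. (case i of Inl a \<Rightarrow> 0 | Inr a \<Rightarrow> sqrt beta * b $ a))"

definition zvec :: "real \<Rightarrow> real^'d \<Rightarrow> real^'d \<Rightarrow> real^('d + 'd)" where
  "zvec beta th om = (\<chi> i. (case i of Inl a \<Rightarrow> th $ a | Inr a \<Rightarrow> om $ a / sqrt beta))"

definition theta_part :: "real^('d + 'd) \<Rightarrow> real^'d" where
  "theta_part z = (\<chi> a. z $ Inl a)"

definition inner_step :: "(nat \<Rightarrow> real^'k^'k) \<Rightarrow> real \<Rightarrow> real^'k^'k \<Rightarrow> real^'k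
    \<Rightarrow> real^'k \<Rightarrow> nat \<Rightarrow> real^'k \<Rightarrow> real^'k" where
  "inner_step G stp Gm gm zm t z = z - stp *\<^sub>R (G t *v z + (Gm - G t) *v zm - gm)"

primrec inner_run :: "nat \<Rightarrow> (nat \<Rightarrow> real^'k^'k) \<Rightarrow> real \<Rightarrow> real^'k^'k \<Rightarrow> real^'k
    \<Rightarrow> real^'k \<Rightarrow> nat \<Rightarrow> real^'k \<Rightarrow> (real^'k) pmf" where
  "inner_run n G stp Gm gm zm 0 z = return_pmf z"
| "inner_run n G stp Gm gm zm (Suc k) z =
     bind_pmf (pmf_of_set {1..n}) (\<lambda>t. inner_run n G stp Gm gm zm k (inner_step G stp Gm gm zm t z))"

text \<open>One epoch from z_m: sample a batch of size B uniformly among subsets of [n],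
  K ~ Geom(B/(B+1)) (P(K=k) = (1/(B+1)) (B/(B+1))^k), then K inner iterations.\<close>
definition epoch :: "nat \<Rightarrow> nat \<Rightarrow> (nat \<Rightarrow> real^'k^'k) \<Rightarrow> (nat \<Rightarrow> real^'k) \<Rightarrow> real
    \<Rightarrow> real^'k \<Rightarrow> (real^'k) pmf" where
  "epoch n B G g stp zm =
     bind_pmf (pmf_of_set {S. S \<subseteq> {1..n} \<and> card S = B}) (\<lambda>S.
     bind_pmf (geometric_pmf (1 / (real B + 1))) (\<lambda>K.
       inner_run n G stp ((1 / real B) *\<^sub>R (\<Sum>t\<in>S. G t)) ((1 / real B) *\<^sub>R (\<Sum>t\<in>S. g t)) zm K zm))"

primrec scsg :: "nat \<Rightarrow> nat \<Rightarrow> (nat \<Rightarrow> real^'k^'k) \<Rightarrow> (nat \<Rightarrow> real^'k) \<Rightarrow> real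
    \<Rightarrow> (real^'k) pmf \<Rightarrow> nat \<Rightarrow> (real^'k) pmf" where
  "scsg n B G g stp Z0 0 = Z0"
| "scsg n B G g stp Z0 (Suc m) = bind_pmf (scsg n B G g stp Z0 m) (epoch n B G g stp)"

end

theory Submission
  imports Defs
begin

lemma matrix_inv_both:
  fixes A :: "'a::semiring_1^'n^'m"
  assumes "invertible A"
  shows "A ** matrix_inv A = mat 1" "matrix_inv A ** A = mat 1"
proof -
  from assms obtain A' :: "'a^'m^'n" where "A ** A' = mat 1 \<and> A' ** A = mat 1"
    unfolding invertible_def by blast
  hence "A ** matrix_inv A = mat 1 \<and> matrix_inv A ** A = mat 1"
    unfolding matrix_inv_def by (rule someI)
  thus "A ** matrix_inv A = mat 1" "matrix_inv A ** A = mat 1" by auto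
qed

lemma spec_norm_bound: "norm (M *v x) \<le> spec_norm M * norm (x::real^'n)"
  unfolding spec_norm_def by (rule onorm) simp

lemma spec_norm_nonneg: "0 \<le> spec_norm (M::real^'n^'m)"
  unfolding spec_norm_def by (rule onorm_pos_le) simp

lemma spec_norm_bound_sq: "(norm (M *v x))\<^sup>2 \<le> (spec_norm M)\<^sup>2 * (norm (x::real^'n))\<^sup>2"
proof -
  have "norm (M *v x) \<le> spec_norm M * norm x" by (rule spec_norm_bound)
  hence "(norm (M *v x))\<^sup>2 \<le> (spec_norm M * norm x)\<^sup>2"
    by (simp add: power_mono)
  thus ?thesis by (simp add: power_mult_distrib)
qed

lemma sum_norm_sq_shift:
  fixes a :: "'a::real_inner" and b :: "nat \<Rightarrow> 'a"
  assumes "finite T" "(\<Sum>t\<in>T. b t) = 0"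
  shows "(\<Sum>t\<in>T. (norm (a + b t))\<^sup>2) = real (card T) * (norm a)\<^sup>2 + (\<Sum>t\<in>T. (norm (b t))\<^sup>2)"
proof -
  have "(\<Sum>t\<in>T. (norm (a + b t))\<^sup>2) = (\<Sum>t\<in>T. (norm a)\<^sup>2 + 2 * inner a (b t) + (norm (b t))\<^sup>2)"
    by (intro sum.cong refl) (simp add: power2_norm_eq_inner algebra_simps inner_commute)
  also have "\<dots> = real (card T) * (norm a)\<^sup>2 + 2 * inner a (\<Sum>t\<in>T. b t) + (\<Sum>t\<in>T. (norm (b t))\<^sup>2)"
    by (simp add: sum.distrib sum_distrib_left inner_sum_right)
  finally show ?thesis using assms by simp
qed

lemma sum_norm_sq_center:
  fixes a :: "nat \<Rightarrow> 'a::real_inner"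
  assumes "finite T" "T \<noteq> {}"
  shows "(\<Sum>t\<in>T. (norm (a t - (1 / real (card T)) *\<^sub>R (\<Sum>s\<in>T. a s)))\<^sup>2)
     = (\<Sum>t\<in>T. (norm (a t))\<^sup>2) - real (card T) * (norm ((1 / real (card T)) *\<^sub>R (\<Sum>s\<in>T. a s)))\<^sup>2"
proof -
  define m where "m = (1 / real (card T)) *\<^sub>R (\<Sum>s\<in>T. a s)"
  have cT: "real (card T) > 0" using assms by (simp add: card_gt_0_iff)
  have sm: "(\<Sum>s\<in>T. a s) = real (card T) *\<^sub>R m" using cT by (simp add: m_def)
  have "(\<Sum>t\<in>T. (norm (a t - m))\<^sup>2) = (\<Sum>t\<in>T. (norm (a t))\<^sup>2 - 2 * inner m (a t) + (norm m)\<^sup>2)"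
    by (intro sum.cong refl) (simp add: power2_norm_eq_inner algebra_simps inner_commute)
  also have "\<dots> = (\<Sum>t\<in>T. (norm (a t))\<^sup>2) - 2 * inner m (\<Sum>t\<in>T. a t) + real (card T) * (norm m)\<^sup>2"
    by (simp add: sum.distrib sum_subtractf sum_distrib_left inner_sum_right)
  also have "\<dots> = (\<Sum>t\<in>T. (norm (a t))\<^sup>2) - real (card T) * (norm m)\<^sup>2"
    by (simp add: sm power2_norm_eq_inner)
  finally show ?thesis by (simp add: m_def)
qed

lemma mean_norm_sq_le:
  fixes a :: "nat \<Rightarrow> 'a::real_inner"
  assumes "finite T" "T \<noteq> {}"
  shows "real (card T) * (norm ((1 / real (card T)) *\<^sub>R (\<Sum>s\<in>T. a s)))\<^sup>2 \<le> (\<Sum>t\<in>T. (norm (a t))\<^sup>2)"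
  using sum_norm_sq_center[OF assms, of a] sum_nonneg[of T "\<lambda>t. (norm (a t - (1 / real (card T)) *\<^sub>R (\<Sum>s\<in>T. a s)))\<^sup>2"]
  by simp

lemma young_sq:
  fixes A B e :: real
  assumes "e > 0"
  shows "(A + B)\<^sup>2 \<le> (1 + e) * A\<^sup>2 + (1 + 1 / e) * B\<^sup>2"
proof -
  have "0 \<le> (e * A - B)\<^sup>2 / e" using assms by simp
  also have "(e * A - B)\<^sup>2 / e = e * A\<^sup>2 - 2 * A * B + B\<^sup>2 / e"
    using assms by (simp add: power2_eq_square field_simps)
  finally have "2 * A * B \<le> e * A\<^sup>2 + B\<^sup>2 / e" by simp
  thus ?thesis by (simp add: power2_eq_square algebra_simps)
qed

lemma norm_young_sq:
  fixes a b :: "'a::real_normed_vector"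
  assumes "e > 0"
  shows "(norm (a + b))\<^sup>2 \<le> (1 + e) * (norm a)\<^sup>2 + (1 + 1 / e) * (norm b)\<^sup>2"
proof -
  have "(norm (a + b))\<^sup>2 \<le> (norm a + norm b)\<^sup>2"
    by (simp add: norm_triangle_ineq power_mono)
  also have "\<dots> \<le> (1 + e) * (norm a)\<^sup>2 + (1 + 1 / e) * (norm b)\<^sup>2" by (rule young_sq[OF assms])
  finally show ?thesis .
qed

lemma sum_matrix_vector: "(sum f T) *v w = (\<Sum>t\<in>T. f t *v (w::real^'n))"
  for f :: "'a \<Rightarrow> real^'n^'m"
proof (induction T rule: infinite_finite_induct)
  case (insert x F) thus ?case by (simp add: matrix_vector_mult_add_rdistrib)
qed auto

lemma norm_sq_vec: "(norm (v::real^'n))\<^sup>2 = (\<Sum>i\<in>UNIV. (v$i)\<^sup>2)"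
  unfolding power2_norm_eq_inner inner_vec_def by (simp add: power2_eq_square)

lemma diag_mult_norm:
  fixes v :: "real^'n"
  assumes "\<And>i. 0 \<le> c i" "\<And>i. c i \<le> r"
  shows "(norm (\<chi> i. c i * v$i))\<^sup>2 \<le> r\<^sup>2 * (norm v)\<^sup>2"
proof -
  have "(norm (\<chi> i. c i * v$i))\<^sup>2 = (\<Sum>i\<in>UNIV. (c i)\<^sup>2 * (v$i)\<^sup>2)"
    by (simp add: norm_sq_vec power_mult_distrib)
  also have "\<dots> \<le> (\<Sum>i\<in>UNIV. r\<^sup>2 * (v$i)\<^sup>2)"
    by (intro sum_mono mult_right_mono power_mono assms) auto
  also have "\<dots> = r\<^sup>2 * (norm v)\<^sup>2" by (simp add: norm_sq_vec sum_distrib_left)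
  finally show ?thesis .
qed

lemma abs_inner_le: "(\<Sum>i\<in>UNIV. \<bar>(a::real^'n)$i\<bar> * \<bar>b$i\<bar>) \<le> norm a * norm b"
proof -
  let ?a = "(\<chi> i. \<bar>a$i\<bar>)::real^'n" and ?b = "(\<chi> i. \<bar>b$i\<bar>)::real^'n"
  have "(\<Sum>i\<in>UNIV. \<bar>a$i\<bar> * \<bar>b$i\<bar>) = inner ?a ?b" by (simp add: inner_vec_def)
  also have "\<dots> \<le> norm ?a * norm ?b" by (rule norm_cauchy_schwarz)
  also have "norm ?a = norm a" by (simp add: norm_vec_def)
  also have "norm ?b = norm b" by (simp add: norm_vec_def)
  finally show ?thesis .
qed

locale scsg_loc =
  fixes n B :: nat
    and Gt :: "nat \<Rightarrow> real^'k^'k" and gt :: "nat \<Rightarrow> real^'k"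
    and Q Lam :: "real^'k^'k" and zs :: "real^'k"
    and stp lmin LG2 HH :: real
  assumes n_pos: "0 < n" and B_pos: "0 < B" and B_le: "B \<le> n"
    and Q_inv: "invertible Q" and Lam_diag: "diagonal_mat Lam"
    and G_diag: "avg n Gt = Q ** Lam ** matrix_inv Q"
    and opt: "avg n Gt *v zs = avg n gt"
    and lam_ge: "\<And>i. lmin \<le> Lam$i$i" and lmin_pos: "0 < lmin"
    and LG2_bound: "\<And>w. (\<Sum>t\<in>{1..n}. (norm (Gt t *v w))\<^sup>2) \<le> real n * LG2 * (norm w)\<^sup>2"
    and lmin_small: "4 * lmin\<^sup>2 \<le> LG2"
    and stp_def: "stp = lmin / (6 * (cond_num Q)\<^sup>2 * LG2)"
    and B_large: "real B \<ge> 4 / (stp * lmin)"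
    and HH_def: "HH = (\<Sum>t\<in>{1..n}. (norm (Gt t *v zs - gt t))\<^sup>2) / real n"
begin

definition "G = avg n Gt"
definition "g = avg n gt"
definition "P = matrix_inv Q"
definition "lam i = Lam$i$i"
definition "kap = cond_num Q"
definition "x = stp * lmin"
definition "V z = (norm (P *v (z - zs)))\<^sup>2"

lemma card_n: "card {1..n} = n" by simp
lemma Tne: "{1..n} \<noteq> {}" using n_pos by auto

lemma G_sum: "(\<Sum>t\<in>{1..n}. Gt t) = real n *\<^sub>R G"
  using n_pos by (simp add: G_def avg_def)
lemma g_sum: "(\<Sum>t\<in>{1..n}. gt t) = real n *\<^sub>R g"
  using n_pos by (simp add: g_def avg_def)

lemma PQ: "P ** Q = mat 1" and QP: "Q ** P = mat 1"
  using matrix_inv_both[OF Q_inv] by (auto simp: P_def)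

lemma G_eq: "G = Q ** Lam ** P" using G_diag by (simp add: G_def P_def)

lemma Lam_mult: "Lam *v v = (\<chi> i. lam i * v$i)"
proof -
  have "(Lam *v v)$i = lam i * v$i" for i
  proof -
    have "(Lam *v v)$i = (\<Sum>j\<in>UNIV. Lam$i$j * v$j)" by (simp add: matrix_vector_mult_def)
    also have "\<dots> = (\<Sum>j\<in>UNIV. if j = i then Lam$i$i * v$j else 0)"
      by (intro sum.cong refl) (use Lam_diag in \<open>auto simp: diagonal_mat_def\<close>)
    also have "\<dots> = Lam$i$i * v$i" by simp
    finally show ?thesis by (simp add: lam_def)
  qed
  thus ?thesis by (simp add: vec_eq_iff)
qed

lemma PG: "P *v (G *v v) = Lam *v (P *v v)"
proof -
  have "P *v (G *v v) = (P ** Q ** Lam ** P) *v v"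
    by (simp add: G_eq matrix_vector_mul_assoc matrix_mul_assoc)
  also have "\<dots> = Lam *v (P *v v)" by (simp add: PQ matrix_vector_mul_assoc)
  finally show ?thesis .
qed

lemma Q_P: "Q *v (P *v v) = v" by (simp add: matrix_vector_mul_assoc QP)
lemma P_Q: "P *v (Q *v v) = v" by (simp add: matrix_vector_mul_assoc PQ)

lemma norm_le_QP: "norm v \<le> spec_norm Q * norm (P *v v)"
  using spec_norm_bound[of Q "P *v v"] by (simp add: Q_P)

lemma norm_sq_le_QP: "(norm v)\<^sup>2 \<le> (spec_norm Q)\<^sup>2 * (norm (P *v v))\<^sup>2"
  using spec_norm_bound_sq[of Q "P *v v"] by (simp add: Q_P)

lemma kap_ge1: "1 \<le> kap"
proof -
  obtain i :: 'k where True by simp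
  define v :: "real^'k" where "v = axis i 1"
  have v0: "norm v > 0" by (simp add: v_def)
  have "norm v \<le> spec_norm Q * norm (P *v v)" by (rule norm_le_QP)
  also have "\<dots> \<le> spec_norm Q * (spec_norm P * norm v)"
    by (intro mult_left_mono spec_norm_bound spec_norm_nonneg)
  finally have "1 * norm v \<le> (spec_norm Q * spec_norm P) * norm v" by simp
  hence "1 \<le> spec_norm Q * spec_norm P" using v0 by (simp only: mult_le_cancel_right)
  thus ?thesis by (simp add: kap_def cond_num_def P_def)
qed

lemma kap_sq: "kap\<^sup>2 = (spec_norm Q)\<^sup>2 * (spec_norm P)\<^sup>2"
  by (simp add: kap_def cond_num_def P_def power_mult_distrib)

lemma G_mean: "G *v w = (1 / real n) *\<^sub>R (\<Sum>t\<in>{1..n}. Gt t *v w)"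
  by (simp add: G_def avg_def sum_matrix_vector[symmetric] matrix_vector_mult_scaleR
      scaleR_matrix_vector_assoc)

end

context scsg_loc begin

lemma LG2_pos: "0 < LG2"
  using lmin_small lmin_pos by (smt (verit) zero_less_power)

lemma kap_pos: "0 < kap" using kap_ge1 by simp

lemma kapQ: "cond_num Q = kap" by (simp add: kap_def)

lemma stp_pos: "0 < stp"
  using lmin_pos LG2_pos kap_pos by (simp add: stp_def kapQ)

lemma x_pos: "0 < x" using stp_pos lmin_pos by (simp add: x_def)

lemma x_eq: "x = lmin\<^sup>2 / (6 * kap\<^sup>2 * LG2)"
proof -
  have "x = stp * lmin" by (simp add: x_def)
  also have "\<dots> = lmin\<^sup>2 / (6 * kap\<^sup>2 * LG2)" by (simp add: stp_def kapQ power2_eq_square)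
  finally show ?thesis .
qed

lemma x_le: "x \<le> 1 / 24"
proof -
  have k1: "1 \<le> kap\<^sup>2" using kap_ge1 by (simp add: one_le_power)
  have "6 * LG2 \<le> 6 * kap\<^sup>2 * LG2" using k1 LG2_pos by simp
  hence "lmin\<^sup>2 / (6 * kap\<^sup>2 * LG2) \<le> lmin\<^sup>2 / (6 * LG2)"
    using LG2_pos kap_pos by (intro divide_left_mono) auto
  also have "\<dots> \<le> 1 / 24" using lmin_small LG2_pos by (simp add: field_simps)
  finally show ?thesis by (simp add: x_eq)
qed

lemma key: "stp\<^sup>2 * kap\<^sup>2 * LG2 = x / 6"
proof -
  have "x = stp * lmin" by (simp add: x_def)
  moreover have "stp\<^sup>2 * kap\<^sup>2 * LG2 = stp * lmin / 6"
    using LG2_pos kap_pos by (simp add: stp_def kapQ power2_eq_square field_simps)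
  ultimately show ?thesis by simp
qed

lemma key2: "stp\<^sup>2 * (spec_norm P)\<^sup>2 * (spec_norm Q)\<^sup>2 * LG2 = x / 6"
  using key by (simp add: kap_sq mult_ac)

lemma ux: "4 \<le> real B * x"
proof -
  have "4 / x \<le> real B" using B_large by (simp add: x_def)
  thus ?thesis using x_pos by (simp add: field_simps)
qed

lemma G_sq_le: "(norm (G *v w))\<^sup>2 \<le> LG2 * (norm w)\<^sup>2"
proof -
  have "real (card {1..n}) * (norm ((1 / real (card {1..n})) *\<^sub>R (\<Sum>t\<in>{1..n}. Gt t *v w)))\<^sup>2
     \<le> (\<Sum>t\<in>{1..n}. (norm (Gt t *v w))\<^sup>2)"
    by (rule mean_norm_sq_le) (use Tne in auto)
  hence "real n * (norm (G *v w))\<^sup>2 \<le> real n * LG2 * (norm w)\<^sup>2"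
    using LG2_bound[of w] by (simp add: G_mean)
  thus ?thesis using n_pos by (simp add: mult.assoc)
qed

lemma lam_eig: "G *v (Q *v axis i 1) = lam i *\<^sub>R (Q *v axis i 1)"
proof -
  have "G *v (Q *v axis i 1) = Q *v (Lam *v (P *v (Q *v axis i 1)))"
    by (simp add: G_eq matrix_vector_mul_assoc matrix_mul_assoc)
  also have "\<dots> = Q *v (Lam *v axis i 1)" by (simp add: P_Q)
  also have "Lam *v axis i 1 = lam i *\<^sub>R axis i 1"
    by (simp add: Lam_mult vec_eq_iff axis_def)
  finally show ?thesis by (simp add: matrix_vector_mult_scaleR)
qed

lemma lam_pos: "0 < lam i" using lam_ge[of i] lmin_pos by (simp add: lam_def)
lemma lmin_le_lam: "lmin \<le> lam i" using lam_ge[of i] by (simp add: lam_def)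

lemma lam_sq_le: "(lam i)\<^sup>2 \<le> LG2"
proof -
  define v where "v = Q *v axis i (1::real)"
  have "P *v v = axis i 1" by (simp add: v_def P_Q)
  hence "v \<noteq> 0" by (metis axis_eq_0_iff matrix_vector_mult_0_right zero_neq_one)
  hence nv: "(norm v)\<^sup>2 > 0" by simp
  have "(lam i)\<^sup>2 * (norm v)\<^sup>2 = (norm (G *v v))\<^sup>2"
    by (simp add: v_def lam_eig power_mult_distrib)
  also have "\<dots> \<le> LG2 * (norm v)\<^sup>2" by (rule G_sq_le)
  finally show ?thesis using nv by simp
qed

lemma slam_le: "stp * lam i \<le> 1 / 6"
proof -
  have l1: "lmin \<le> sqrt LG2" using lmin_small lmin_pos
    by (metis less_eq_real_def real_le_rsqrt mult_le_cancel_right1 order_trans power2_eq_square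
        zero_le_power2 le_add_same_cancel2 mult_2 numeral_Bit0 one_le_numeral)
  have l2: "lam i \<le> sqrt LG2" using lam_sq_le[of i] lam_pos[of i] by (simp add: real_le_rsqrt)
  have "lmin * lam i \<le> sqrt LG2 * sqrt LG2"
    using l1 l2 lmin_pos lam_pos[of i] LG2_pos by (intro mult_mono) auto
  also have "\<dots> = LG2" using LG2_pos by simp
  finally have a: "lmin * lam i \<le> LG2" .
  have k1: "1 \<le> kap\<^sup>2" using kap_ge1 by (simp add: one_le_power)
  have "stp * lam i = lmin * lam i / (6 * kap\<^sup>2 * LG2)" by (simp add: stp_def kapQ)
  also have "\<dots> \<le> LG2 / (6 * kap\<^sup>2 * LG2)" using a LG2_pos kap_pos by (intro divide_right_mono) auto
  also have "\<dots> = (1 / 6) * (1 / kap\<^sup>2)" using LG2_pos by simp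
  also have "\<dots> \<le> 1 / 6" using k1 by (simp add: divide_le_eq_1)
  finally show ?thesis .
qed

lemma x_le_slam: "x \<le> stp * lam i"
  using lmin_le_lam[of i] stp_pos by (simp add: x_def)

end

lemma mv_sum: "M *v (sum f T) = (\<Sum>t\<in>T. M *v (f t::real^'n))"
  for M :: "real^'n^'m"
proof (induction T rule: infinite_finite_induct)
  case (insert x F) thus ?case by (simp add: matrix_vector_right_distrib)
qed auto

context scsg_loc begin

definition "ee Gm gm z0 = (Gm - G) *v (z0 - zs) + (Gm *v zs - gm)"

lemma step_eq: "inner_step Gt stp Gm gm z0 t z - zs
  = ((z - zs) - stp *\<^sub>R (G *v (z - zs) + ee Gm gm z0)) - stp *\<^sub>R ((Gt t - G) *v (z - z0))"
  by (simp add: inner_step_def ee_def algebra_simps)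

lemma sum_dev: "(\<Sum>t\<in>{1..n}. (Gt t - G) *v w) = 0"
proof -
  have "(\<Sum>t\<in>{1..n}. (Gt t - G) *v w) = (\<Sum>t\<in>{1..n}. Gt t *v w) - real n *\<^sub>R (G *v w)"
    by (simp add: matrix_vector_mult_diff_rdistrib sum_subtractf sum_constant_scaleR del: sum_constant)
  also have "real n *\<^sub>R (G *v w) = (\<Sum>t\<in>{1..n}. Gt t *v w)"
    using n_pos by (simp add: G_mean)
  finally show ?thesis by simp
qed

lemma sum_dev_sq: "(\<Sum>t\<in>{1..n}. (norm ((Gt t - G) *v w))\<^sup>2) \<le> real n * LG2 * (norm w)\<^sup>2"
proof -
  have h: "(1 / real (card {1..n})) *\<^sub>R (\<Sum>s\<in>{1..n}. Gt s *v w) = G *v w"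
    by (simp add: G_mean)
  have "(\<Sum>t\<in>{1..n}. (norm (Gt t *v w - G *v w))\<^sup>2) = (\<Sum>t\<in>{1..n}. (norm (Gt t *v w))\<^sup>2) - real (card {1..n}) * (norm (G *v w))\<^sup>2"
    using sum_norm_sq_center[of "{1..n}" "\<lambda>t. Gt t *v w"] Tne unfolding h by simp
  hence "(\<Sum>t\<in>{1..n}. (norm ((Gt t - G) *v w))\<^sup>2) \<le> (\<Sum>t\<in>{1..n}. (norm (Gt t *v w))\<^sup>2)"
    by (simp add: matrix_vector_mult_diff_rdistrib)
  also have "\<dots> \<le> real n * LG2 * (norm w)\<^sup>2" by (rule LG2_bound)
  finally show ?thesis .
qed

lemma PGv: "P *v (G *v v) = (\<chi> i. lam i * (P *v v)$i)"
  by (simp add: PG Lam_mult)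

lemma a_eq: "P *v ((z - zs) - stp *\<^sub>R (G *v (z - zs) + ee Gm gm z0))
   = (\<chi> i. (1 - stp * lam i) * (P *v (z - zs))$i) + (- stp) *\<^sub>R (P *v ee Gm gm z0)"
  by (simp add: matrix_vector_mult_diff_distrib matrix_vector_right_distrib
      matrix_vector_mult_scaleR PGv vec_eq_iff algebra_simps)

lemma step_avg_comp:
  "(\<Sum>t\<in>{1..n}. (P *v (inner_step Gt stp Gm gm z0 t z - zs))$i) / real n
    = (1 - stp * lam i) * (P *v (z - zs))$i - stp * (P *v ee Gm gm z0)$i"
proof -
  define a where "a = P *v ((z - zs) - stp *\<^sub>R (G *v (z - zs) + ee Gm gm z0))"
  have "(\<Sum>t\<in>{1..n}. P *v (inner_step Gt stp Gm gm z0 t z - zs))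
      = (\<Sum>t\<in>{1..n}. a - stp *\<^sub>R (P *v ((Gt t - G) *v (z - z0))))"
    by (simp add: step_eq a_def matrix_vector_mult_diff_distrib matrix_vector_mult_scaleR)
  also have "\<dots> = real n *\<^sub>R a - stp *\<^sub>R (P *v (\<Sum>t\<in>{1..n}. (Gt t - G) *v (z - z0)))"
    by (simp add: sum_subtractf scaleR_sum_right[symmetric] mv_sum sum_constant_scaleR del: sum_constant)
  also have "\<dots> = real n *\<^sub>R a" unfolding sum_dev by simp
  finally have eqv: "(\<Sum>t\<in>{1..n}. P *v (inner_step Gt stp Gm gm z0 t z - zs)) = real n *\<^sub>R a" .
  have "(\<Sum>t\<in>{1..n}. (P *v (inner_step Gt stp Gm gm z0 t z - zs))$i) = (\<Sum>t\<in>{1..n}. P *v (inner_step Gt stp Gm gm z0 t z - zs))$i"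
    by (simp only: sum_component)
  also have "\<dots> = real n * a$i" unfolding eqv by simp
  finally have "(\<Sum>t\<in>{1..n}. (P *v (inner_step Gt stp Gm gm z0 t z - zs))$i) = real n * a$i" .
  thus ?thesis using n_pos by (simp add: a_def a_eq)
qed

lemma step_avg_V:
  "(\<Sum>t\<in>{1..n}. V (inner_step Gt stp Gm gm z0 t z)) / real n
    \<le> ((1 + x/2) * (1 - x)\<^sup>2 + x/6) * V z + (1 + 2/x) * stp\<^sup>2 * (norm (P *v ee Gm gm z0))\<^sup>2
       + x/6 * (V z0 - 2 * inner (P *v (z - zs)) (P *v (z0 - zs)))"
proof -
  define v where "v = P *v (z - zs)"
  define d where "d = P *v (z0 - zs)"
  define pe where "pe = P *v ee Gm gm z0"
  define a where "a = P *v ((z - zs) - stp *\<^sub>R (G *v (z - zs) + ee Gm gm z0))"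
  define b where "b t = - stp *\<^sub>R (P *v ((Gt t - G) *v (z - z0)))" for t
  have hP: "P *v (inner_step Gt stp Gm gm z0 t z - zs) = a + b t" for t
    by (simp add: step_eq a_def b_def matrix_vector_mult_diff_distrib matrix_vector_mult_scaleR)
  have sb: "(\<Sum>t\<in>{1..n}. b t) = 0"
  proof -
    have "(\<Sum>t\<in>{1..n}. b t) = - (stp *\<^sub>R (\<Sum>t\<in>{1..n}. P *v ((Gt t - G) *v (z - z0))))"
      by (simp add: b_def sum_negf scaleR_sum_right)
    also have "(\<Sum>t\<in>{1..n}. P *v ((Gt t - G) *v (z - z0))) = P *v (\<Sum>t\<in>{1..n}. (Gt t - G) *v (z - z0))"
      by (simp add: mv_sum)
    finally show ?thesis unfolding sum_dev by simp
  qed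
  have "(\<Sum>t\<in>{1..n}. V (inner_step Gt stp Gm gm z0 t z)) = (\<Sum>t\<in>{1..n}. (norm (a + b t))\<^sup>2)"
    by (simp add: V_def hP)
  also have "\<dots> = real n * (norm a)\<^sup>2 + (\<Sum>t\<in>{1..n}. (norm (b t))\<^sup>2)"
    using sum_norm_sq_shift[of "{1..n}" b a] sb by simp
  finally have e1: "(\<Sum>t\<in>{1..n}. V (inner_step Gt stp Gm gm z0 t z)) = real n * (norm a)\<^sup>2 + (\<Sum>t\<in>{1..n}. (norm (b t))\<^sup>2)" .
  have Pw: "P *v (z - z0) = v - d" by (simp add: v_def d_def matrix_vector_mult_diff_distrib)
  have "(\<Sum>t\<in>{1..n}. (norm (b t))\<^sup>2) = stp\<^sup>2 * (\<Sum>t\<in>{1..n}. (norm (P *v ((Gt t - G) *v (z - z0))))\<^sup>2)"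
    by (simp add: b_def power_mult_distrib sum_distrib_left)
  also have "\<dots> \<le> stp\<^sup>2 * (\<Sum>t\<in>{1..n}. (spec_norm P)\<^sup>2 * (norm ((Gt t - G) *v (z - z0)))\<^sup>2)"
    by (intro mult_left_mono sum_mono spec_norm_bound_sq) auto
  also have "\<dots> = stp\<^sup>2 * (spec_norm P)\<^sup>2 * (\<Sum>t\<in>{1..n}. (norm ((Gt t - G) *v (z - z0)))\<^sup>2)"
    by (simp add: sum_distrib_left mult.assoc)
  also have "\<dots> \<le> stp\<^sup>2 * (spec_norm P)\<^sup>2 * (real n * LG2 * (norm (z - z0))\<^sup>2)"
    by (intro mult_left_mono sum_dev_sq) auto
  also have "\<dots> \<le> stp\<^sup>2 * (spec_norm P)\<^sup>2 * (real n * LG2 * ((spec_norm Q)\<^sup>2 * (norm (v - d))\<^sup>2))"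
    using norm_sq_le_QP[of "z - z0"] LG2_pos unfolding Pw
    by (intro mult_left_mono) auto
  also have "\<dots> = real n * (stp\<^sup>2 * (spec_norm P)\<^sup>2 * (spec_norm Q)\<^sup>2 * LG2) * (norm (v - d))\<^sup>2"
    by (simp add: mult_ac)
  also have "\<dots> = real n * (x / 6) * (norm (v - d))\<^sup>2" by (simp add: key2)
  finally have e2: "(\<Sum>t\<in>{1..n}. (norm (b t))\<^sup>2) \<le> real n * (x / 6) * (norm (v - d))\<^sup>2" .
  have c0: "0 \<le> 1 - stp * lam i" "1 - stp * lam i \<le> 1 - x" for i
    using slam_le[of i] x_le_slam[of i] by auto
  have e3: "(norm (\<chi> i. (1 - stp * lam i) * v$i))\<^sup>2 \<le> (1 - x)\<^sup>2 * (norm v)\<^sup>2"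
    by (rule diag_mult_norm) (use c0 in auto)
  have "(norm a)\<^sup>2 \<le> (1 + x/2) * (norm (\<chi> i. (1 - stp * lam i) * v$i))\<^sup>2 + (1 + 1/(x/2)) * (norm ((- stp) *\<^sub>R pe))\<^sup>2"
    unfolding a_def a_eq v_def[symmetric] pe_def[symmetric]
    by (rule norm_young_sq) (use x_pos in auto)
  also have "\<dots> \<le> (1 + x/2) * ((1 - x)\<^sup>2 * (norm v)\<^sup>2) + (1 + 2/x) * (stp\<^sup>2 * (norm pe)\<^sup>2)"
    using e3 x_pos by (intro add_mono mult_left_mono) (auto simp: power_mult_distrib)
  finally have e4: "(norm a)\<^sup>2 \<le> (1 + x/2) * (1 - x)\<^sup>2 * (norm v)\<^sup>2 + (1 + 2/x) * stp\<^sup>2 * (norm pe)\<^sup>2"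
    by (simp add: mult_ac)
  have e5: "(norm (v - d))\<^sup>2 = (norm v)\<^sup>2 - 2 * inner v d + (norm d)\<^sup>2"
    by (simp add: power2_norm_eq_inner inner_diff_left inner_diff_right inner_commute)
  have "(\<Sum>t\<in>{1..n}. V (inner_step Gt stp Gm gm z0 t z)) / real n = (norm a)\<^sup>2 + (\<Sum>t\<in>{1..n}. (norm (b t))\<^sup>2) / real n"
    unfolding e1 using n_pos by (simp add: add_divide_distrib)
  also have "\<dots> \<le> (norm a)\<^sup>2 + (x / 6) * (norm (v - d))\<^sup>2"
    using e2 n_pos by (simp add: divide_le_eq mult_ac)
  also have "\<dots> \<le> (1 + x/2) * (1 - x)\<^sup>2 * (norm v)\<^sup>2 + (1 + 2/x) * stp\<^sup>2 * (norm pe)\<^sup>2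
       + (x / 6) * ((norm v)\<^sup>2 - 2 * inner v d + (norm d)\<^sup>2)"
    using e4 unfolding e5 by simp
  also have "\<dots> = ((1 + x/2) * (1 - x)\<^sup>2 + x/6) * (norm v)\<^sup>2 + (1 + 2/x) * stp\<^sup>2 * (norm pe)\<^sup>2
       + x/6 * ((norm d)\<^sup>2 - 2 * inner v d)"
    by (simp only: ring_distribs)
  finally show ?thesis
    unfolding V_def v_def[symmetric] d_def[symmetric] pe_def[symmetric] .
qed

end

lemma E_bind_fin:
  fixes h :: "'b \<Rightarrow> real"
  assumes "finite (set_pmf p)" "\<And>x. x \<in> set_pmf p \<Longrightarrow> finite (set_pmf (F x))"
  shows "measure_pmf.expectation (bind_pmf p F) h
       = measure_pmf.expectation p (\<lambda>x. measure_pmf.expectation (F x) h)"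
proof -
  have "measure_pmf.expectation (bind_pmf p F) h
      = (\<Sum>a\<in>set_pmf p. pmf p a *\<^sub>R measure_pmf.expectation (F a) h)"
    by (rule pmf_expectation_bind[of "set_pmf p"]) (use assms in auto)
  also have "\<dots> = measure_pmf.expectation p (\<lambda>x. measure_pmf.expectation (F x) h)"
    by (rule integral_measure_pmf[symmetric]) (use assms in auto)
  finally show ?thesis .
qed

lemma geo_partial:
  fixes Y :: "nat \<Rightarrow> real" and q c R :: real
  assumes Y0: "\<And>k. 0 \<le> Y k" and rec: "\<And>k. Y (Suc k) \<le> c * Y k + R"
    and q: "0 < q" "q \<le> 1" and c: "0 \<le> c" and R: "0 \<le> R" and pc: "(1 - q) * c < 1"
  shows "(\<Sum>k<N. (1 - q)^k * q * Y k) \<le> (q * Y 0 + (1 - q) * R) / (1 - (1 - q) * c)"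
proof -
  define p where "p = 1 - q"
  have p: "0 \<le> p" "p < 1" using q by (auto simp: p_def)
  define S where "S N = (\<Sum>k<N. p^k * q * Y k)" for N
  have Smono: "S N \<le> S (Suc N)" for N
    using Y0[of N] p q by (simp add: S_def)
  have wsum: "(\<Sum>k<N. p^k * q) \<le> 1" for N
  proof -
    have "(\<Sum>k<N. p^k * q) = (1 - p^N)"
    proof (induction N)
      case (Suc N) thus ?case by (simp add: p_def algebra_simps)
    qed simp
    also have "\<dots> \<le> 1" using p by simp
    finally show ?thesis .
  qed
  have Sstep: "S (Suc N) \<le> q * Y 0 + p * c * S N + p * R" for N
  proof -
    have "S (Suc N) = q * Y 0 + (\<Sum>k<N. p^(Suc k) * q * Y (Suc k))"
      unfolding S_def by (subst sum.lessThan_Suc_shift) simp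
    also have "(\<Sum>k<N. p^(Suc k) * q * Y (Suc k)) \<le> (\<Sum>k<N. p^(Suc k) * q * (c * Y k + R))"
      using rec p q by (intro sum_mono mult_left_mono) auto
    also have "\<dots> = p * c * S N + p * R * (\<Sum>k<N. p^k * q)"
      by (simp add: S_def sum_distrib_left sum.distrib algebra_simps)
    also have "\<dots> \<le> p * c * S N + p * R * 1"
      using wsum[of N] p R by (intro add_left_mono mult_left_mono) auto
    finally show ?thesis by simp
  qed
  have "S N \<le> q * Y 0 + p * c * S N + p * R" using Smono[of N] Sstep[of N] by linarith
  hence "S N * (1 - p * c) \<le> q * Y 0 + p * R" by (simp add: algebra_simps)
  hence "S N \<le> (q * Y 0 + p * R) / (1 - p * c)" using pc by (simp add: p_def le_divide_eq)
  thus ?thesis by (simp add: S_def p_def)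
qed

lemma geo_nn:
  fixes Y :: "nat \<Rightarrow> real" and q c R :: real
  assumes Y0: "\<And>k. 0 \<le> Y k" and rec: "\<And>k. Y (Suc k) \<le> c * Y k + R"
    and q: "0 < q" "q \<le> 1" and c: "0 \<le> c" and R: "0 \<le> R" and pc: "(1 - q) * c < 1"
  shows "(\<integral>\<^sup>+k. ennreal (Y k) \<partial>measure_pmf (geometric_pmf q))
     \<le> ennreal ((q * Y 0 + (1 - q) * R) / (1 - (1 - q) * c))"
proof -
  have "(\<integral>\<^sup>+k. ennreal (Y k) \<partial>measure_pmf (geometric_pmf q))
      = (\<integral>\<^sup>+k. ennreal (pmf (geometric_pmf q) k) * ennreal (Y k) \<partial>count_space UNIV)"
    by (rule nn_integral_measure_pmf)
  also have "\<dots> = (\<Sum>k. ennreal ((1 - q)^k * q * Y k))"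
    using q Y0 by (simp add: nn_integral_count_space_nat ennreal_mult'[symmetric] mult.assoc)
  also have "\<dots> \<le> ennreal ((q * Y 0 + (1 - q) * R) / (1 - (1 - q) * c))"
  proof (rule suminf_le_const)
    fix N
    have "(\<Sum>k<N. ennreal ((1 - q)^k * q * Y k)) = ennreal (\<Sum>k<N. (1 - q)^k * q * Y k)"
      using q Y0 by (intro sum_ennreal) auto
    also have "\<dots> \<le> ennreal ((q * Y 0 + (1 - q) * R) / (1 - (1 - q) * c))"
      by (rule ennreal_leI, rule geo_partial) (use assms in auto)
    finally show "(\<Sum>k<N. ennreal ((1 - q)^k * q * Y k)) \<le> \<dots>" .
  qed simp
  finally show ?thesis .
qed

context scsg_loc begin

lemma set_unif: "set_pmf (pmf_of_set {1..n}) = {1..n}"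
  using Tne by simp

lemma set_unif': "set_pmf (pmf_of_set {Suc 0..n}) = {Suc 0..n}"
  using Tne by simp

lemma fin_run: "finite (set_pmf (inner_run n Gt stp Gm gm z0 k z))"
proof (induction k arbitrary: z)
  case 0 thus ?case by simp
next
  case (Suc k) thus ?case by (simp add: set_unif')
qed

lemma run_Suc_last: "inner_run n Gt stp Gm gm z0 (Suc k) z
  = bind_pmf (inner_run n Gt stp Gm gm z0 k z)
      (\<lambda>z'. bind_pmf (pmf_of_set {1..n}) (\<lambda>t. return_pmf (inner_step Gt stp Gm gm z0 t z')))"
proof (induction k arbitrary: z)
  case 0 thus ?case by (simp add: bind_return_pmf)
next
  case (Suc k)
  have "inner_run n Gt stp Gm gm z0 (Suc (Suc k)) z
     = bind_pmf (pmf_of_set {1..n}) (\<lambda>t. inner_run n Gt stp Gm gm z0 (Suc k) (inner_step Gt stp Gm gm z0 t z))"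
    by simp
  also have "\<dots> = bind_pmf (pmf_of_set {1..n}) (\<lambda>t. bind_pmf (inner_run n Gt stp Gm gm z0 k (inner_step Gt stp Gm gm z0 t z))
      (\<lambda>z'. bind_pmf (pmf_of_set {1..n}) (\<lambda>t. return_pmf (inner_step Gt stp Gm gm z0 t z'))))"
    by (simp only: Suc.IH)
  also have "\<dots> = bind_pmf (inner_run n Gt stp Gm gm z0 (Suc k) z)
      (\<lambda>z'. bind_pmf (pmf_of_set {1..n}) (\<lambda>t. return_pmf (inner_step Gt stp Gm gm z0 t z')))"
    by (simp add: bind_assoc_pmf)
  finally show ?case .
qed

lemma E_Suc: "measure_pmf.expectation (inner_run n Gt stp Gm gm z0 (Suc k) z) h
  = measure_pmf.expectation (inner_run n Gt stp Gm gm z0 k z)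
      (\<lambda>z'. (\<Sum>t\<in>{1..n}. h (inner_step Gt stp Gm gm z0 t z')) / real n)"
  for h :: "real^'k \<Rightarrow> real"
proof -
  have inner: "measure_pmf.expectation (bind_pmf (pmf_of_set {1..n}) (\<lambda>t. return_pmf (inner_step Gt stp Gm gm z0 t z'))) h
      = (\<Sum>t\<in>{1..n}. h (inner_step Gt stp Gm gm z0 t z')) / real n" for z'
    using Tne by (subst pmf_expectation_bind_pmf_of_set) (auto simp: sum_divide_distrib divide_inverse mult.commute sum_distrib_left)
  have "measure_pmf.expectation (inner_run n Gt stp Gm gm z0 (Suc k) z) h
    = measure_pmf.expectation (inner_run n Gt stp Gm gm z0 k z)
      (\<lambda>z'. measure_pmf.expectation (bind_pmf (pmf_of_set {1..n}) (\<lambda>t. return_pmf (inner_step Gt stp Gm gm z0 t z'))) h)"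
    unfolding run_Suc_last by (rule E_bind_fin) (auto simp: fin_run set_unif')
  also have "\<dots> = measure_pmf.expectation (inner_run n Gt stp Gm gm z0 k z)
      (\<lambda>z'. (\<Sum>t\<in>{1..n}. h (inner_step Gt stp Gm gm z0 t z')) / real n)"
    by (simp only: inner)
  finally show ?thesis .
qed

end

context scsg_loc begin

definition "Yk Gm gm z0 k = measure_pmf.expectation (inner_run n Gt stp Gm gm z0 k z0) V"
definition "mk Gm gm z0 k i = measure_pmf.expectation (inner_run n Gt stp Gm gm z0 k z0) (\<lambda>z. (P *v (z - zs))$i)"

lemma int_run: "integrable (measure_pmf (inner_run n Gt stp Gm gm z0 k z)) f"
  for f :: "real^'k \<Rightarrow> real"
  by (rule integrable_measure_pmf_finite[OF fin_run])

lemma Yk_nonneg: "0 \<le> Yk Gm gm z0 k"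
  unfolding Yk_def V_def by (rule integral_nonneg_AE) auto

lemma inner_sum: "inner (u::real^'k) w = (\<Sum>i\<in>UNIV. u$i * w$i)"
  by (simp add: inner_vec_def)

lemma Y_Suc:
  fixes Gm :: "real^'k^'k" and gm z0 :: "real^'k" and k :: nat
  defines "d \<equiv> P *v (z0 - zs)"
  shows "Yk Gm gm z0 (Suc k) \<le> ((1 + x/2) * (1 - x)\<^sup>2 + x/6) * Yk Gm gm z0 k
     + (1 + 2/x) * stp\<^sup>2 * (norm (P *v ee Gm gm z0))\<^sup>2
     + x/6 * (V z0 - 2 * (\<Sum>i\<in>UNIV. mk Gm gm z0 k i * d$i))"
proof -
  let ?E = "measure_pmf.expectation (inner_run n Gt stp Gm gm z0 k z0)"
  let ?cY = "(1 + x/2) * (1 - x)\<^sup>2 + x/6"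
  let ?C1 = "(1 + 2/x) * stp\<^sup>2 * (norm (P *v ee Gm gm z0))\<^sup>2"
  have "Yk Gm gm z0 (Suc k) = ?E (\<lambda>z. (\<Sum>t\<in>{1..n}. V (inner_step Gt stp Gm gm z0 t z)) / real n)"
    unfolding Yk_def by (rule E_Suc)
  also have "\<dots> \<le> ?E (\<lambda>z. ?cY * V z + ?C1 + x/6 * (V z0 - 2 * (\<Sum>i\<in>UNIV. (P *v (z - zs))$i * d$i)))"
    by (rule integral_mono[OF int_run int_run]) (use step_avg_V in \<open>simp add: d_def inner_sum\<close>)
  also have "\<dots> = ?cY * ?E V + ?C1 + x/6 * (V z0 - 2 * (\<Sum>i\<in>UNIV. ?E (\<lambda>z. (P *v (z - zs))$i) * d$i))"
    by (simp add: int_run integral_sum)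
  finally show ?thesis by (simp add: Yk_def mk_def)
qed

lemma m_Suc: "mk Gm gm z0 (Suc k) i = (1 - stp * lam i) * mk Gm gm z0 k i - stp * (P *v ee Gm gm z0)$i"
proof -
  let ?E = "measure_pmf.expectation (inner_run n Gt stp Gm gm z0 k z0)"
  have "mk Gm gm z0 (Suc k) i = ?E (\<lambda>z. (\<Sum>t\<in>{1..n}. (P *v (inner_step Gt stp Gm gm z0 t z - zs))$i) / real n)"
    unfolding mk_def by (rule E_Suc)
  also have "\<dots> = ?E (\<lambda>z. (1 - stp * lam i) * (P *v (z - zs))$i - stp * (P *v ee Gm gm z0)$i)"
    by (simp only: step_avg_comp)
  also have "\<dots> = (1 - stp * lam i) * mk Gm gm z0 k i - stp * (P *v ee Gm gm z0)$i"
    by (simp add: int_run mk_def)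
  finally show ?thesis .
qed

lemma m_bound:
  "mk Gm gm z0 k i * (P *v (z0 - zs))$i \<ge> - (\<bar>(P *v ee Gm gm z0)$i\<bar> * \<bar>(P *v (z0 - zs))$i\<bar>) / lam i"
proof (induction k)
  case 0
  have "mk Gm gm z0 0 i = (P *v (z0 - zs))$i" by (simp add: mk_def)
  hence "0 \<le> mk Gm gm z0 0 i * (P *v (z0 - zs))$i" by simp
  moreover have "0 \<le> (\<bar>(P *v ee Gm gm z0)$i\<bar> * \<bar>(P *v (z0 - zs))$i\<bar>) / lam i"
    using lam_pos[of i] by simp
  ultimately show ?case by linarith
next
  case (Suc k)
  define a where "a = \<bar>(P *v ee Gm gm z0)$i\<bar> * \<bar>(P *v (z0 - zs))$i\<bar>"
  define c where "c = 1 - stp * lam i"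
  have c0: "0 \<le> c" using slam_le[of i] by (simp add: c_def)
  have l: "0 < lam i" by (rule lam_pos)
  have IH: "mk Gm gm z0 k i * (P *v (z0 - zs))$i \<ge> - a / lam i" using Suc.IH by (simp add: a_def)
  have eb: "- (stp * (P *v ee Gm gm z0)$i * (P *v (z0 - zs))$i) \<ge> - stp * a"
  proof -
    have "stp * (P *v ee Gm gm z0)$i * (P *v (z0 - zs))$i \<le> \<bar>stp * (P *v ee Gm gm z0)$i * (P *v (z0 - zs))$i\<bar>" by simp
    also have "\<dots> = stp * a" using stp_pos by (simp add: a_def abs_mult)
    finally show ?thesis by simp
  qed
  have "mk Gm gm z0 (Suc k) i * (P *v (z0 - zs))$i
      = c * (mk Gm gm z0 k i * (P *v (z0 - zs))$i) - stp * (P *v ee Gm gm z0)$i * (P *v (z0 - zs))$i"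
    by (simp add: m_Suc c_def algebra_simps)
  also have "\<dots> \<ge> c * (- a / lam i) - stp * a"
    using mult_left_mono[OF IH c0] eb by linarith
  also have "c * (- a / lam i) - stp * a = - a / lam i"
    using l by (simp add: c_def field_simps)
  finally show ?case by (simp add: a_def)
qed

lemma m_sum_bound:
  "- (\<Sum>i\<in>UNIV. mk Gm gm z0 k i * (P *v (z0 - zs))$i) \<le> norm (P *v ee Gm gm z0) * norm (P *v (z0 - zs)) / lmin"
proof -
  have "- (\<Sum>i\<in>UNIV. mk Gm gm z0 k i * (P *v (z0 - zs))$i)
      \<le> (\<Sum>i\<in>UNIV. (\<bar>(P *v ee Gm gm z0)$i\<bar> * \<bar>(P *v (z0 - zs))$i\<bar>) / lam i)"
  proof -
    have "(\<Sum>i\<in>UNIV. - (mk Gm gm z0 k i * (P *v (z0 - zs))$i))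
      \<le> (\<Sum>i\<in>UNIV. (\<bar>(P *v ee Gm gm z0)$i\<bar> * \<bar>(P *v (z0 - zs))$i\<bar>) / lam i)"
    proof (rule sum_mono)
      fix i :: 'k
      have "mk Gm gm z0 k i * (P *v (z0 - zs))$i \<ge> - (\<bar>(P *v ee Gm gm z0)$i\<bar> * \<bar>(P *v (z0 - zs))$i\<bar>) / lam i"
        by (rule m_bound)
      thus "- (mk Gm gm z0 k i * (P *v (z0 - zs))$i) \<le> (\<bar>(P *v ee Gm gm z0)$i\<bar> * \<bar>(P *v (z0 - zs))$i\<bar>) / lam i"
        by linarith
    qed
    thus ?thesis by (simp add: sum_negf)
  qed
  also have "\<dots> \<le> (\<Sum>i\<in>UNIV. (\<bar>(P *v ee Gm gm z0)$i\<bar> * \<bar>(P *v (z0 - zs))$i\<bar>) / lmin)"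
    by (intro sum_mono divide_left_mono lmin_le_lam) (auto intro: lmin_pos lam_pos mult_pos_pos)
  also have "\<dots> = (\<Sum>i\<in>UNIV. \<bar>(P *v ee Gm gm z0)$i\<bar> * \<bar>(P *v (z0 - zs))$i\<bar>) / lmin"
    by (simp add: sum_divide_distrib)
  also have "\<dots> \<le> norm (P *v ee Gm gm z0) * norm (P *v (z0 - zs)) / lmin"
    using lmin_pos by (intro divide_right_mono abs_inner_le) auto
  finally show ?thesis .
qed

end

context scsg_loc begin

lemma stp_eq: "stp = x / lmin" using lmin_pos by (simp add: x_def)

lemma cY_le: "(1 + x/2) * (1 - x)\<^sup>2 + x/6 \<le> 1 - 31/24 * x"
proof -
  have e: "(1 + x/2) * (1 - x)\<^sup>2 + x/6 = 1 - 4/3 * x + x * x\<^sup>2 / 2"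
    by (simp add: field_simps power2_eq_square)
  have "x\<^sup>2 \<le> (1/24)\<^sup>2" using x_pos x_le by (intro power_mono) auto
  hence "x * x\<^sup>2 \<le> x * (1/24)\<^sup>2" using x_pos by (intro mult_left_mono) auto
  hence "x * x\<^sup>2 \<le> x / 576" by (simp add: power2_eq_square)
  thus ?thesis unfolding e using x_pos by linarith
qed

definition "Rr Gm gm z0 = 57/24 * (x / lmin\<^sup>2) * (norm (P *v ee Gm gm z0))\<^sup>2 + x/4 * V z0"

lemma Rr_nonneg: "0 \<le> Rr Gm gm z0"
  using x_pos lmin_pos by (simp add: Rr_def V_def)

lemma Y_rec: "Yk Gm gm z0 (Suc k) \<le> (1 - 31/24 * x) * Yk Gm gm z0 k + Rr Gm gm z0"
proof -
  define pe where "pe = norm (P *v ee Gm gm z0)"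
  define dd where "dd = norm (P *v (z0 - zs))"
  define Sm where "Sm = (\<Sum>i\<in>UNIV. mk Gm gm z0 k i * (P *v (z0 - zs))$i)"
  define Y where "Y = Yk Gm gm z0 k"
  have V0: "V z0 = dd\<^sup>2" by (simp add: V_def dd_def)
  have Y0: "0 \<le> Y" by (simp add: Y_def Yk_nonneg)
  have h2: "- Sm \<le> pe * dd / lmin" unfolding Sm_def pe_def dd_def by (rule m_sum_bound)
  have h3: "2 * (pe * dd / lmin) \<le> dd\<^sup>2 / 2 + 2 * (pe / lmin)\<^sup>2"
  proof -
    have g: "2 * (a * b) \<le> a\<^sup>2 / 2 + 2 * b\<^sup>2" for a b :: real
    proof -
      have "0 \<le> (a - 2 * b)\<^sup>2" by simp
      thus ?thesis by (simp add: power2_eq_square algebra_simps)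
    qed
    have "pe * dd / lmin = dd * (pe / lmin)" by simp
    thus ?thesis using g[of dd "pe / lmin"] by (simp add: mult.commute)
  qed
  have "Yk Gm gm z0 (Suc k) \<le> ((1 + x/2) * (1 - x)\<^sup>2 + x/6) * Y + (1 + 2/x) * stp\<^sup>2 * pe\<^sup>2 + x/6 * (V z0 - 2 * Sm)"
    using Y_Suc[of Gm gm z0 k] by (simp add: Y_def pe_def Sm_def)
  also have "\<dots> \<le> (1 - 31/24 * x) * Y + (1 + 2/x) * stp\<^sup>2 * pe\<^sup>2 + x/6 * (V z0 + 2 * (pe * dd / lmin))"
    using x_pos h2 Y0 by (intro add_mono mult_right_mono cY_le mult_left_mono) auto
  also have "\<dots> \<le> (1 - 31/24 * x) * Y + (1 + 2/x) * stp\<^sup>2 * pe\<^sup>2 + x/6 * (V z0 + (dd\<^sup>2 / 2 + 2 * (pe / lmin)\<^sup>2))"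
    using x_pos x_le h3 by (intro add_mono mult_left_mono) auto
  also have "\<dots> = (1 - 31/24 * x) * Y + (x * (x + 7/3) / lmin\<^sup>2) * pe\<^sup>2 + x/4 * dd\<^sup>2"
  proof -
    have a1: "(1 + 2/x) * stp\<^sup>2 * pe\<^sup>2 = (x*x + 2*x) / lmin\<^sup>2 * pe\<^sup>2"
    proof -
      have ss: "stp\<^sup>2 = (x*x) / lmin\<^sup>2"
      proof -
        have "x * x = (stp * stp) * (lmin * lmin)" by (simp add: x_def)
        thus ?thesis using lmin_pos by (simp add: power2_eq_square)
      qed
      have "(1 + 2/x) * stp\<^sup>2 = (1 + 2/x) * (x*x) / lmin\<^sup>2" unfolding ss by simp
      also have "(1 + 2/x) * (x*x) = x*x + 2*x" using x_pos by (simp add: distrib_right)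
      finally show ?thesis by simp
    qed
    have a2: "x/6 * (dd\<^sup>2 + (dd\<^sup>2 / 2 + 2 * (pe / lmin)\<^sup>2)) = x/4 * dd\<^sup>2 + x/3 * pe\<^sup>2 / lmin\<^sup>2"
      by (simp add: power_divide algebra_simps)
    have a3: "x * (x + 7/3) / lmin\<^sup>2 * pe\<^sup>2 = (x*x + 2*x) / lmin\<^sup>2 * pe\<^sup>2 + x/3 * pe\<^sup>2 / lmin\<^sup>2"
      by (simp add: algebra_simps add_divide_distrib)
    show ?thesis unfolding V0 a1 a2 a3 by simp
  qed
  also have "\<dots> \<le> (1 - 31/24 * x) * Y + (x * (57/24) / lmin\<^sup>2) * pe\<^sup>2 + x/4 * dd\<^sup>2"
    using x_pos x_le lmin_pos by (intro add_mono mult_right_mono divide_right_mono mult_left_mono) auto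
  also have "\<dots> = (1 - 31/24 * x) * Yk Gm gm z0 k + Rr Gm gm z0"
    by (simp add: Rr_def Y_def V0 pe_def)
  finally show ?thesis .
qed

lemma Yk0: "Yk Gm gm z0 0 = V z0" by (simp add: Yk_def)

lemma run_nn: "(\<integral>\<^sup>+z. ennreal (V z) \<partial>measure_pmf (inner_run n Gt stp Gm gm z0 k z0)) = ennreal (Yk Gm gm z0 k)"
  unfolding Yk_def by (rule nn_integral_eq_integral[OF int_run]) (simp add: V_def)

lemma inner_geo:
  "(\<integral>\<^sup>+K. \<integral>\<^sup>+z. ennreal (V z) \<partial>measure_pmf (inner_run n Gt stp Gm gm z0 K z0) \<partial>measure_pmf (geometric_pmf (1 / (real B + 1))))
   \<le> ennreal ((V z0 + real B * Rr Gm gm z0) / (1 + real B * (31/24) * x))"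
proof -
  define q where "q = 1 / (real B + 1)"
  define c where "c = 1 - 31/24 * x"
  have q: "0 < q" "q \<le> 1" by (auto simp: q_def)
  have c: "0 \<le> c" "c < 1" using x_pos x_le by (auto simp: c_def)
  have pc: "(1 - q) * c < 1"
  proof -
    have "(1 - q) * c \<le> 1 * c" using q c by (intro mult_right_mono) auto
    thus ?thesis using c by simp
  qed
  have "(\<integral>\<^sup>+K. \<integral>\<^sup>+z. ennreal (V z) \<partial>measure_pmf (inner_run n Gt stp Gm gm z0 K z0) \<partial>measure_pmf (geometric_pmf q))
      = (\<integral>\<^sup>+K. ennreal (Yk Gm gm z0 K) \<partial>measure_pmf (geometric_pmf q))"
    by (simp add: run_nn)
  also have "\<dots> \<le> ennreal ((q * Yk Gm gm z0 0 + (1 - q) * Rr Gm gm z0) / (1 - (1 - q) * c))"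
    by (rule geo_nn) (use q c pc Yk_nonneg Rr_nonneg Y_rec in \<open>auto simp: c_def\<close>)
  also have "(q * Yk Gm gm z0 0 + (1 - q) * Rr Gm gm z0) / (1 - (1 - q) * c)
      = (V z0 + real B * Rr Gm gm z0) / (1 + real B * (31/24) * x)"
  proof -
    have B1: "real B + 1 > 0" by simp
    have q1: "1 - q = real B / (real B + 1)" unfolding q_def using B1 by (simp add: field_simps)
    have n1: "q * Yk Gm gm z0 0 + (1 - q) * Rr Gm gm z0 = (V z0 + real B * Rr Gm gm z0) / (real B + 1)"
      unfolding Yk0 q1 by (simp add: q_def add_divide_distrib)
    have "1 - (1 - q) * c = (real B + 1 - real B * c) / (real B + 1)"
      unfolding q1 using B1 by (simp add: field_simps)
    also have "real B + 1 - real B * c = 1 + real B * (31/24) * x" by (simp add: c_def algebra_simps)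
    finally have n2: "1 - (1 - q) * c = (1 + real B * (31/24) * x) / (real B + 1)" .
    show ?thesis unfolding n1 n2 using B1 by simp
  qed
  finally show ?thesis by (simp add: q_def)
qed

end

lemma card_subsets_with:
  assumes "finite A" "t \<in> A"
  shows "card {S. S \<subseteq> A \<and> card S = Suc k \<and> t \<in> S \<and> Pr S}
       = card {S. S \<subseteq> A - {t} \<and> card S = k \<and> Pr (insert t S)}"
proof -
  have eq: "{S. S \<subseteq> A \<and> card S = Suc k \<and> t \<in> S \<and> Pr S}
      = insert t ` {S. S \<subseteq> A - {t} \<and> card S = k \<and> Pr (insert t S)}"
  proof (intro equalityI subsetI)
    fix S assume S: "S \<in> {S. S \<subseteq> A \<and> card S = Suc k \<and> t \<in> S \<and> Pr S}"
    have fS: "finite S" using S assms(1) finite_subset by auto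
    have "S = insert t (S - {t})" using S by auto
    moreover have "S - {t} \<in> {S. S \<subseteq> A - {t} \<and> card S = k \<and> Pr (insert t S)}"
      using S fS by (auto simp: card_Diff_singleton insert_absorb)
    ultimately show "S \<in> insert t ` {S. S \<subseteq> A - {t} \<and> card S = k \<and> Pr (insert t S)}" by blast
  next
    fix S assume "S \<in> insert t ` {S. S \<subseteq> A - {t} \<and> card S = k \<and> Pr (insert t S)}"
    then obtain S' where S': "S = insert t S'" "S' \<subseteq> A - {t}" "card S' = k" "Pr (insert t S')" by auto
    have "finite S'" using S' assms(1) finite_subset by auto
    moreover have "t \<notin> S'" using S' by auto
    ultimately show "S \<in> {S. S \<subseteq> A \<and> card S = Suc k \<and> t \<in> S \<and> Pr S}"
      using S' assms by auto
  qed
  have inj: "inj_on (insert t) {S. S \<subseteq> A - {t} \<and> card S = k \<and> Pr (insert t S)}"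
    by (rule inj_onI) (metis Diff_insert_absorb mem_Collect_eq subset_Diff_insert)
  show ?thesis unfolding eq by (rule card_image[OF inj])
qed

lemma sum_if_card: "finite X \<Longrightarrow> (\<Sum>S\<in>X. if Pr S then c else 0) = real (card {S\<in>X. Pr S}) * (c::real)"
  by (simp add: sum.inter_filter[symmetric])

lemma sample_var:
  fixes h :: "nat \<Rightarrow> 'a::real_inner" and A :: "nat set"
  assumes fA: "finite A" and B1: "1 \<le> B" and BA: "B \<le> card A" and h0: "(\<Sum>t\<in>A. h t) = 0"
  shows "(\<Sum>S\<in>{S. S \<subseteq> A \<and> card S = B}. (norm (\<Sum>t\<in>S. h t))\<^sup>2)
     \<le> real (card {S. S \<subseteq> A \<and> card S = B}) * (real B / real (card A)) * (\<Sum>t\<in>A. (norm (h t))\<^sup>2)"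
proof -
  define Sets where "Sets = {S. S \<subseteq> A \<and> card S = B}"
  have fSets: "finite Sets" unfolding Sets_def using fA by (simp add: finite_Collect_subsets)
  obtain k where k: "B = Suc k" using B1 by (cases B) auto
  define N where "N = card A"
  have N1: "1 \<le> N" using B1 BA by (simp add: N_def)
  have c1: "card {S\<in>Sets. t \<in> S \<and> t \<in> S} = (N - 1) choose k" if tA: "t \<in> A" for t
  proof -
    have "{S\<in>Sets. t \<in> S \<and> t \<in> S} = {S. S \<subseteq> A \<and> card S = Suc k \<and> t \<in> S \<and> True}"
      by (auto simp: Sets_def k)
    also have "card \<dots> = card {S. S \<subseteq> A - {t} \<and> card S = k \<and> True}"
      by (rule card_subsets_with[OF fA tA])
    also have "\<dots> = card (A - {t}) choose k" using n_subsets[of "A - {t}" k] fA by simp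
    finally show ?thesis using tA fA by (simp add: N_def)
  qed
  define C2 where "C2 = (if k = 0 then 0 else (N - 2) choose (k - 1))"
  have c2: "card {S\<in>Sets. t \<in> S \<and> s \<in> S} = C2" if tA: "t \<in> A" and sA: "s \<in> A" and ts: "t \<noteq> s" for t s
  proof -
    have "{S\<in>Sets. t \<in> S \<and> s \<in> S} = {S. S \<subseteq> A \<and> card S = Suc k \<and> t \<in> S \<and> s \<in> S}"
      by (auto simp: Sets_def k)
    also have "card \<dots> = card {S. S \<subseteq> A - {t} \<and> card S = k \<and> s \<in> insert t S}"
      by (rule card_subsets_with[OF fA tA])
    also have "{S. S \<subseteq> A - {t} \<and> card S = k \<and> s \<in> insert t S} = {S. S \<subseteq> A - {t} \<and> card S = k \<and> s \<in> S}"
      using ts by auto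
    finally have e: "card {S\<in>Sets. t \<in> S \<and> s \<in> S} = card {S. S \<subseteq> A - {t} \<and> card S = k \<and> s \<in> S}" .
    show ?thesis
    proof (cases k)
      case 0
      have em: "{S. S \<subseteq> A - {t} \<and> card S = k \<and> s \<in> S} = {}"
        using 0 fA by (auto dest: finite_subset)
      have "card {S. S \<subseteq> A - {t} \<and> card S = k \<and> s \<in> S} = 0" by (subst em) simp
      thus ?thesis using e 0 by (simp add: C2_def)
    next
      case (Suc k')
      have sA': "s \<in> A - {t}" using sA ts by auto
      have "card {S. S \<subseteq> A - {t} \<and> card S = Suc k' \<and> s \<in> S \<and> True}
          = card {S. S \<subseteq> A - {t} - {s} \<and> card S = k' \<and> True}"
        by (rule card_subsets_with) (use fA sA' in auto)
      also have "\<dots> = card (A - {t} - {s}) choose k'" using n_subsets[of "A - {t} - {s}" k'] fA by simp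
      also have "card (A - {t} - {s}) = N - 2" using fA tA sA ts by (simp add: N_def card_Diff_singleton_if)
      finally show ?thesis using e Suc by (simp add: C2_def)
    qed
  qed
  have sq: "(norm (\<Sum>t\<in>S. h t))\<^sup>2 = (\<Sum>t\<in>A. \<Sum>s\<in>A. if t \<in> S \<and> s \<in> S then inner (h t) (h s) else 0)"
    if "S \<in> Sets" for S
  proof -
    have SA: "S \<subseteq> A" using that by (simp add: Sets_def)
    have "(norm (\<Sum>t\<in>S. h t))\<^sup>2 = (\<Sum>y\<in>S. \<Sum>x\<in>S. inner (h x) (h y))"
      by (simp add: power2_norm_eq_inner inner_sum_left inner_sum_right)
    also have "\<dots> = (\<Sum>t\<in>S. \<Sum>s\<in>S. inner (h t) (h s))" by (rule sum.swap)
    also have "\<dots> = (\<Sum>t\<in>A. if t \<in> S then (\<Sum>s\<in>S. inner (h t) (h s)) else 0)"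
      using SA fA by (simp add: sum.inter_restrict[symmetric] Int_absorb1)
    also have "\<dots> = (\<Sum>t\<in>A. \<Sum>s\<in>A. if t \<in> S \<and> s \<in> S then inner (h t) (h s) else 0)"
    proof (intro sum.cong refl)
      fix t assume "t \<in> A"
      have "(\<Sum>s\<in>S. inner (h t) (h s)) = (\<Sum>s\<in>A. if s \<in> S then inner (h t) (h s) else 0)"
        using SA fA by (simp add: sum.inter_restrict[symmetric] Int_absorb1)
      thus "(if t \<in> S then (\<Sum>s\<in>S. inner (h t) (h s)) else 0) = (\<Sum>s\<in>A. if t \<in> S \<and> s \<in> S then inner (h t) (h s) else 0)"
        by (auto intro: sum.cong)
    qed
    finally show ?thesis .
  qed
  have "(\<Sum>S\<in>Sets. (norm (\<Sum>t\<in>S. h t))\<^sup>2)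
      = (\<Sum>S\<in>Sets. \<Sum>t\<in>A. \<Sum>s\<in>A. if t \<in> S \<and> s \<in> S then inner (h t) (h s) else 0)"
    by (rule sum.cong[OF refl sq])
  also have "\<dots> = (\<Sum>t\<in>A. \<Sum>s\<in>A. \<Sum>S\<in>Sets. if t \<in> S \<and> s \<in> S then inner (h t) (h s) else 0)"
    by (subst sum.swap) (rule sum.cong[OF refl], rule sum.swap)
  also have "\<dots> = (\<Sum>t\<in>A. \<Sum>s\<in>A. real (card {S\<in>Sets. t \<in> S \<and> s \<in> S}) * inner (h t) (h s))"
    by (intro sum.cong refl) (simp add: sum_if_card[OF fSets])
  also have "\<dots> = (\<Sum>t\<in>A. real ((N - 1) choose k) * inner (h t) (h t) + (\<Sum>s\<in>A - {t}. real C2 * inner (h t) (h s)))"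
  proof (intro sum.cong refl)
    fix t assume tA: "t \<in> A"
    have "(\<Sum>s\<in>A. real (card {S\<in>Sets. t \<in> S \<and> s \<in> S}) * inner (h t) (h s))
        = real (card {S\<in>Sets. t \<in> S \<and> t \<in> S}) * inner (h t) (h t) + (\<Sum>s\<in>A - {t}. real (card {S\<in>Sets. t \<in> S \<and> s \<in> S}) * inner (h t) (h s))"
      using fA tA by (simp add: sum.remove)
    also have "\<dots> = real ((N - 1) choose k) * inner (h t) (h t) + (\<Sum>s\<in>A - {t}. real C2 * inner (h t) (h s))"
      using c1[OF tA] c2[OF tA] by (auto intro!: sum.cong)
    finally show "(\<Sum>s\<in>A. real (card {S\<in>Sets. t \<in> S \<and> s \<in> S}) * inner (h t) (h s)) = \<dots>" .
  qed
  also have "\<dots> = (real ((N - 1) choose k) - real C2) * (\<Sum>t\<in>A. (norm (h t))\<^sup>2)"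
  proof -
    have r: "(\<Sum>s\<in>A - {t}. real C2 * inner (h t) (h s)) = - real C2 * (norm (h t))\<^sup>2" if tA: "t \<in> A" for t
    proof -
      have "(\<Sum>s\<in>A - {t}. inner (h t) (h s)) = (\<Sum>s\<in>A. inner (h t) (h s)) - inner (h t) (h t)"
        using fA tA by (simp add: sum_diff1)
      also have "(\<Sum>s\<in>A. inner (h t) (h s)) = 0" using h0 by (simp add: inner_sum_right[symmetric])
      finally show ?thesis by (simp add: sum_distrib_left[symmetric] power2_norm_eq_inner)
    qed
    have "(\<Sum>t\<in>A. real ((N - 1) choose k) * inner (h t) (h t) + (\<Sum>s\<in>A - {t}. real C2 * inner (h t) (h s)))
        = (\<Sum>t\<in>A. (real ((N - 1) choose k) - real C2) * (norm (h t))\<^sup>2)"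
      by (intro sum.cong refl) (simp add: r power2_norm_eq_inner algebra_simps)
    thus ?thesis by (simp add: sum_distrib_left)
  qed
  also have "\<dots> \<le> real ((N - 1) choose k) * (\<Sum>t\<in>A. (norm (h t))\<^sup>2)"
    by (intro mult_right_mono sum_nonneg) auto
  also have "real ((N - 1) choose k) = real (card Sets) * (real B / real (card A))"
  proof -
    obtain m where m: "N = Suc m" using N1 by (cases N) auto
    have "card Sets = N choose B" unfolding Sets_def N_def using n_subsets[OF fA] by simp
    moreover have "Suc m * (m choose k) = (Suc m choose Suc k) * Suc k" by (rule Suc_times_binomial_eq)
    ultimately have "real N * real ((N - 1) choose k) = real (card Sets) * real B"
      using m k by (metis diff_Suc_1 of_nat_mult)
    thus ?thesis using N1 by (simp add: N_def field_simps)
  qed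
  finally show ?thesis by (simp add: Sets_def mult.assoc)
qed

context scsg_loc begin

definition "Sets = {S. S \<subseteq> {1..n} \<and> card S = B}"
definition "GS S = (1 / real B) *\<^sub>R (\<Sum>t\<in>S. Gt t)"
definition "gS S = (1 / real B) *\<^sub>R (\<Sum>t\<in>S. gt t)"
definition "hh z0 t = (Gt t - G) *v (z0 - zs) + (Gt t *v zs - gt t)"

lemma Sets_fin: "finite Sets"
  unfolding Sets_def by (simp add: finite_Collect_subsets)

lemma Sets_card: "card Sets = n choose B"
  unfolding Sets_def using n_subsets[of "{1..n}" B] by simp

lemma Sets_ne: "Sets \<noteq> {}"
proof -
  have "0 < n choose B" using B_le by (simp add: zero_less_binomial)
  thus ?thesis using Sets_card by auto
qed

lemma GSv: "GS S *v v = (1 / real B) *\<^sub>R (\<Sum>t\<in>S. Gt t *v v)"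
  by (simp add: GS_def scaleR_matrix_vector_assoc[symmetric] sum_matrix_vector)

lemma ee_S:
  assumes "S \<in> Sets"
  shows "ee (GS S) (gS S) z0 = (1 / real B) *\<^sub>R (\<Sum>t\<in>S. hh z0 t)"
proof -
  define W where "W = z0 - zs"
  have cS: "card S = B" using assms by (simp add: Sets_def)
  have "(\<Sum>t\<in>S. G *v W) = real B *\<^sub>R (G *v W)"
    using cS by (simp add: sum_constant_scaleR del: sum_constant)
  hence sG: "(1 / real B) *\<^sub>R (\<Sum>t\<in>S. G *v W) = G *v W"
    using B_pos by simp
  have hhW: "hh z0 t = (Gt t *v W - G *v W) + (Gt t *v zs - gt t)" for t
    by (simp add: hh_def W_def matrix_vector_mult_diff_rdistrib)
  have "(1 / real B) *\<^sub>R (\<Sum>t\<in>S. hh z0 t)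
      = (1 / real B) *\<^sub>R (\<Sum>t\<in>S. Gt t *v W) - (1 / real B) *\<^sub>R (\<Sum>t\<in>S. G *v W)
        + ((1 / real B) *\<^sub>R (\<Sum>t\<in>S. Gt t *v zs) - (1 / real B) *\<^sub>R (\<Sum>t\<in>S. gt t))"
    unfolding hhW by (simp only: sum.distrib sum_subtractf scaleR_right_distrib scaleR_right_diff_distrib)
  also have "\<dots> = GS S *v W - G *v W + (GS S *v zs - gS S)"
    unfolding sG GSv by (simp add: gS_def)
  also have "\<dots> = ee (GS S) (gS S) z0"
    by (simp add: ee_def W_def[symmetric] matrix_vector_mult_diff_rdistrib)
  finally show ?thesis by simp
qed

lemma hh_sum: "(\<Sum>t\<in>{1..n}. hh z0 t) = 0"
proof -
  have "(\<Sum>t\<in>{1..n}. hh z0 t) = (\<Sum>t\<in>{1..n}. (Gt t - G) *v (z0 - zs)) + ((\<Sum>t\<in>{1..n}. Gt t) *v zs - (\<Sum>t\<in>{1..n}. gt t))"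
    by (simp add: hh_def sum.distrib sum_subtractf sum_matrix_vector)
  also have "(\<Sum>t\<in>{1..n}. Gt t) *v zs - (\<Sum>t\<in>{1..n}. gt t) = real n *\<^sub>R (G *v zs - g)"
    unfolding G_sum g_sum by (simp add: scaleR_matrix_vector_assoc algebra_simps)
  also have "G *v zs - g = 0" using opt by (simp add: G_def g_def)
  finally show ?thesis unfolding sum_dev by simp
qed

lemma HH_nonneg: "0 \<le> HH" by (simp add: HH_def sum_nonneg)

lemma hh_sq: "(\<Sum>t\<in>{1..n}. (norm (hh z0 t))\<^sup>2) \<le> real n * (5 * LG2 * (spec_norm Q)\<^sup>2 * V z0 + 5/4 * HH)"
proof -
  have "(\<Sum>t\<in>{1..n}. (norm (hh z0 t))\<^sup>2)
     \<le> (\<Sum>t\<in>{1..n}. (1 + 4) * (norm ((Gt t - G) *v (z0 - zs)))\<^sup>2 + (1 + 1/4) * (norm (Gt t *v zs - gt t))\<^sup>2)"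
    unfolding hh_def by (intro sum_mono norm_young_sq) auto
  also have "\<dots> = 5 * (\<Sum>t\<in>{1..n}. (norm ((Gt t - G) *v (z0 - zs)))\<^sup>2) + 5/4 * (\<Sum>t\<in>{1..n}. (norm (Gt t *v zs - gt t))\<^sup>2)"
    by (simp add: sum.distrib sum_distrib_left)
  also have "\<dots> \<le> 5 * (real n * LG2 * (norm (z0 - zs))\<^sup>2) + 5/4 * (real n * HH)"
    using sum_dev_sq[of "z0 - zs"] n_pos by (simp add: HH_def)
  also have "\<dots> \<le> 5 * (real n * LG2 * ((spec_norm Q)\<^sup>2 * V z0)) + 5/4 * (real n * HH)"
    using norm_sq_le_QP[of "z0 - zs"] LG2_pos by (simp add: V_def mult_left_mono)
  finally show ?thesis by (simp add: algebra_simps)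
qed

lemma avg_ee: "(\<Sum>S\<in>Sets. (norm (P *v ee (GS S) (gS S) z0))\<^sup>2) / real (card Sets)
   \<le> (spec_norm P)\<^sup>2 / real B * (5 * LG2 * (spec_norm Q)\<^sup>2 * V z0 + 5/4 * HH)"
proof -
  have cS: "0 < real (card Sets)" using Sets_fin Sets_ne by (simp add: card_gt_0_iff)
  have "(\<Sum>S\<in>Sets. (norm (P *v ee (GS S) (gS S) z0))\<^sup>2) \<le> (\<Sum>S\<in>Sets. (spec_norm P)\<^sup>2 * (norm (ee (GS S) (gS S) z0))\<^sup>2)"
    by (intro sum_mono spec_norm_bound_sq)
  also have "\<dots> = (spec_norm P)\<^sup>2 / (real B)\<^sup>2 * (\<Sum>S\<in>Sets. (norm (\<Sum>t\<in>S. hh z0 t))\<^sup>2)"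
    by (simp add: sum_distrib_left ee_S power_divide power_mult_distrib cong: sum.cong)
  also have "\<dots> \<le> (spec_norm P)\<^sup>2 / (real B)\<^sup>2 * (real (card Sets) * (real B / real (card {1..n})) * (\<Sum>t\<in>{1..n}. (norm (hh z0 t))\<^sup>2))"
    unfolding Sets_def
    by (intro mult_left_mono sample_var) (use B_pos B_le hh_sum in auto)
  also have "\<dots> \<le> (spec_norm P)\<^sup>2 / (real B)\<^sup>2 * (real (card Sets) * (real B / real n) * (real n * (5 * LG2 * (spec_norm Q)\<^sup>2 * V z0 + 5/4 * HH)))"
  proof -
    have "(\<Sum>t\<in>{1..n}. (norm (hh z0 t))\<^sup>2) \<le> real n * (5 * LG2 * (spec_norm Q)\<^sup>2 * V z0 + 5/4 * HH)"
      by (rule hh_sq)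
    hence "real (card Sets) * (real B / real n) * (\<Sum>t\<in>{1..n}. (norm (hh z0 t))\<^sup>2)
       \<le> real (card Sets) * (real B / real n) * (real n * (5 * LG2 * (spec_norm Q)\<^sup>2 * V z0 + 5/4 * HH))"
      by (intro mult_left_mono) auto
    thus ?thesis by (intro mult_left_mono) auto
  qed
  also have "\<dots> = real (card Sets) * ((spec_norm P)\<^sup>2 / real B * (5 * LG2 * (spec_norm Q)\<^sup>2 * V z0 + 5/4 * HH))"
    using B_pos n_pos by (simp add: power2_eq_square field_simps)
  finally show ?thesis using cS by (simp add: divide_le_eq mult.commute)
qed

end

context scsg_loc begin

definition "u = real B * x"
definition "D1 = 1 + 31/24 * u"
definition "rho1 = (1 + u/4 + 285/144) / D1"
definition "c1 = 285/96 * (x / lmin\<^sup>2) * (spec_norm P)\<^sup>2 * HH / D1"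

lemma u_ge: "4 \<le> u" using ux by (simp add: u_def)
lemma D1_pos: "0 < D1" using u_ge by (simp add: D1_def)

lemma ss: "stp\<^sup>2 = (x*x) / lmin\<^sup>2"
proof -
  have "x * x = (stp * stp) * (lmin * lmin)" by (simp add: x_def)
  thus ?thesis using lmin_pos by (simp add: power2_eq_square)
qed

lemma key3: "x / lmin\<^sup>2 * ((spec_norm P)\<^sup>2 * (spec_norm Q)\<^sup>2 * LG2) = 1/6"
proof -
  define K where "K = (spec_norm P)\<^sup>2 * (spec_norm Q)\<^sup>2 * LG2"
  have "stp\<^sup>2 * K = x / 6" using key2 by (simp add: K_def mult.assoc)
  hence h: "(x*x) / lmin\<^sup>2 * K = x / 6" by (simp only: ss)
  have eq0: "x * (x / lmin\<^sup>2 * K) = (x*x) / lmin\<^sup>2 * K" by simp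
  have "x * (x / lmin\<^sup>2 * K) = x * (1/6)" by (simp only: eq0 h)
  hence "x = 0 \<or> x / lmin\<^sup>2 * K = 1/6" by (simp only: mult_cancel_left)
  hence "x / lmin\<^sup>2 * K = 1/6" using x_pos by auto
  thus ?thesis by (simp only: K_def)
qed

lemma T_split: "(V z0 + real B * Rr Gm gm z0) / (1 + real B * (31/24) * x)
   = (V z0 + real B * (x/4) * V z0) / D1 + (real B * (57/24) * (x / lmin\<^sup>2) / D1) * (norm (P *v ee Gm gm z0))\<^sup>2"
proof -
  have "1 + real B * (31/24) * x = D1" by (simp add: D1_def u_def)
  thus ?thesis by (simp add: Rr_def add_divide_distrib algebra_simps)
qed

lemma epoch_bound:
  "(\<integral>\<^sup>+z. ennreal (V z) \<partial>measure_pmf (epoch n B Gt gt stp z0)) \<le> ennreal (rho1 * V z0 + c1)"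
proof -
  define a where "a = (V z0 + real B * (x/4) * V z0) / D1"
  define b where "b = real B * (57/24) * (x / lmin\<^sup>2) / D1"
  define T where "T S = a + b * (norm (P *v ee (GS S) (gS S) z0))\<^sup>2" for S
  have a0: "0 \<le> a" using D1_pos x_pos by (simp add: a_def V_def)
  have b0: "0 \<le> b" using D1_pos x_pos by (simp add: b_def)
  have T0: "0 \<le> T S" for S using a0 b0 by (simp add: T_def)
  have cS: "0 < real (card Sets)" using Sets_fin Sets_ne by (simp add: card_gt_0_iff)
  have SetsE: "{S. S \<subseteq> {1..n} \<and> card S = B} = Sets" by (simp add: Sets_def)
  have SetsE': "{S. S \<subseteq> {Suc 0..n} \<and> card S = B} = Sets" by (simp add: Sets_def)
  have "(\<integral>\<^sup>+z. ennreal (V z) \<partial>measure_pmf (epoch n B Gt gt stp z0))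
      = (\<integral>\<^sup>+S. (\<integral>\<^sup>+K. \<integral>\<^sup>+z. ennreal (V z) \<partial>measure_pmf (inner_run n Gt stp (GS S) (gS S) z0 K z0)
            \<partial>measure_pmf (geometric_pmf (1 / (real B + 1)))) \<partial>measure_pmf (pmf_of_set Sets))"
    by (simp add: epoch_def GS_def gS_def SetsE SetsE')
  also have "\<dots> \<le> (\<integral>\<^sup>+S. ennreal (T S) \<partial>measure_pmf (pmf_of_set Sets))"
  proof (rule nn_integral_mono)
    fix S
    show "(\<integral>\<^sup>+K. \<integral>\<^sup>+z. ennreal (V z) \<partial>measure_pmf (inner_run n Gt stp (GS S) (gS S) z0 K z0)
            \<partial>measure_pmf (geometric_pmf (1 / (real B + 1)))) \<le> ennreal (T S)"
    proof -
      have "(\<integral>\<^sup>+K. \<integral>\<^sup>+z. ennreal (V z) \<partial>measure_pmf (inner_run n Gt stp (GS S) (gS S) z0 K z0)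
            \<partial>measure_pmf (geometric_pmf (1 / (real B + 1))))
         \<le> ennreal ((V z0 + real B * Rr (GS S) (gS S) z0) / (1 + real B * (31/24) * x))"
        by (rule inner_geo)
      also have "\<dots> = ennreal (T S)" by (simp only: T_split T_def a_def b_def)
      finally show ?thesis .
    qed
  qed
  also have "\<dots> = (\<Sum>S\<in>Sets. ennreal (T S)) / of_nat (card Sets)"
    by (rule nn_integral_pmf_of_set[OF Sets_ne Sets_fin])
  also have "\<dots> = ennreal ((\<Sum>S\<in>Sets. T S) / real (card Sets))"
    using T0 cS by (simp add: ennreal_of_nat_eq_real_of_nat divide_ennreal sum_nonneg)
  also have "(\<Sum>S\<in>Sets. T S) / real (card Sets) = a + b * ((\<Sum>S\<in>Sets. (norm (P *v ee (GS S) (gS S) z0))\<^sup>2) / real (card Sets))"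
    using cS by (simp add: T_def sum.distrib sum_distrib_left[symmetric] add_divide_distrib)
  also have "\<dots> \<le> a + b * ((spec_norm P)\<^sup>2 / real B * (5 * LG2 * (spec_norm Q)\<^sup>2 * V z0 + 5/4 * HH))"
    using avg_ee b0 by (intro add_left_mono mult_left_mono) auto
  also have "\<dots> = rho1 * V z0 + c1"
  proof -
    define Y where "Y = 5 * LG2 * (spec_norm Q)\<^sup>2 * V z0 + 5/4 * HH"
    have "b * ((spec_norm P)\<^sup>2 / real B * Y) = (57/24 * (x / lmin\<^sup>2) * (spec_norm P)\<^sup>2 * Y) / D1"
      using B_pos by (simp add: b_def)
    also have "57/24 * (x / lmin\<^sup>2) * (spec_norm P)\<^sup>2 * Y
        = 57/24 * 5 * (x / lmin\<^sup>2 * ((spec_norm P)\<^sup>2 * (spec_norm Q)\<^sup>2 * LG2)) * V z0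
           + 285/96 * (x / lmin\<^sup>2) * (spec_norm P)\<^sup>2 * HH"
      using lmin_pos by (simp add: Y_def field_simps)
    finally have "b * ((spec_norm P)\<^sup>2 / real B * (5 * LG2 * (spec_norm Q)\<^sup>2 * V z0 + 5/4 * HH))
        = (57/24 * 5 * (x / lmin\<^sup>2 * ((spec_norm P)\<^sup>2 * (spec_norm Q)\<^sup>2 * LG2)) * V z0
           + 285/96 * (x / lmin\<^sup>2) * (spec_norm P)\<^sup>2 * HH) / D1" by (simp only: Y_def)
    also have "\<dots> = (285/144 * V z0 + 285/96 * (x / lmin\<^sup>2) * (spec_norm P)\<^sup>2 * HH) / D1"
      unfolding key3 by simp
    finally have e: "b * ((spec_norm P)\<^sup>2 / real B * (5 * LG2 * (spec_norm Q)\<^sup>2 * V z0 + 5/4 * HH))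
        = (285/144 * V z0 + 285/96 * (x / lmin\<^sup>2) * (spec_norm P)\<^sup>2 * HH) / D1" .
    show ?thesis unfolding e a_def rho1_def c1_def u_def
      using D1_pos lmin_pos by (simp add: field_simps)
  qed
  finally have fin: "((\<And>x y. x \<le> y \<Longrightarrow> ennreal x \<le> ennreal y) \<Longrightarrow> ?thesis)" .
  show ?thesis by (rule fin) (erule ennreal_leI)
qed

end

lemma frac_le_cross:
  fixes a b c d :: real
  assumes "0 < b" "0 < d" "a * d \<le> c * b"
  shows "a / b \<le> c / d"
  using assms by (simp add: divide_le_eq le_divide_eq mult.commute mult.left_commute)
  
context scsg_loc begin

lemma u_eq: "real B * stp * lmin = u" by (simp add: u_def x_def mult.assoc)

lemma rho1_nonneg: "0 \<le> rho1" using D1_pos u_ge by (simp add: rho1_def)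
lemma c1_nonneg: "0 \<le> c1" using D1_pos x_pos HH_nonneg by (simp add: c1_def)

lemma one_minus_rho1: "1 - rho1 = (25/24 * u - 285/144) / D1"
  using D1_pos by (simp add: rho1_def D1_def field_simps)

lemma rho1_lt1: "rho1 < 1"
proof -
  have "0 < (25/24 * u - 285/144) / D1" using D1_pos u_ge by simp
  thus ?thesis using one_minus_rho1 by simp
qed

lemma rho1_le: "rho1 \<le> 4 / (3 * real B * stp * lmin) + 1/3"
proof -
  have u0: "0 < u" using u_ge by simp
  have r: "4 / (3 * real B * stp * lmin) + 1/3 = (4 + u) / (3 * u)"
    using u0 u_eq by (simp add: field_simps mult.assoc)
  have poly: "(1 + u/4 + 285/144) * (3 * u) \<le> (4 + u) * D1"
  proof -
    have "(4 + u) * D1 - (1 + u/4 + 285/144) * (3 * u) = 13/24 * (u - 133/52)\<^sup>2 + 29627/64896"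
      by (simp add: D1_def power2_eq_square algebra_simps)
    moreover have "0 \<le> 13/24 * (u - 133/52)\<^sup>2 + 29627/64896" by simp
    ultimately show ?thesis by linarith
  qed
  show ?thesis unfolding r rho1_def by (rule frac_le_cross) (use D1_pos u0 poly in auto)
qed

lemma geo_le: "(\<Sum>k<M. rho1^k) \<le> 1 / (1 - rho1)"
proof -
  have "(\<Sum>k<M. rho1^k) = (1 - rho1^M) / (1 - rho1)"
  proof -
    have "(\<Sum>k<M. rho1^k) = (rho1^M - 1) / (rho1 - 1)"
      using rho1_lt1 by (simp add: geometric_sum)
    also have "\<dots> = (1 - rho1^M) / (1 - rho1)"
      by (metis minus_diff_eq minus_divide_divide)
    finally show ?thesis .
  qed
  also have "\<dots> \<le> 1 / (1 - rho1)"
    using rho1_lt1 rho1_nonneg by (intro divide_right_mono) auto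
  finally show ?thesis .
qed

lemma scsg_iter:
  "(\<integral>\<^sup>+z. ennreal (V z) \<partial>measure_pmf (scsg n B Gt gt stp Z0 M))
    \<le> ennreal (rho1^M) * (\<integral>\<^sup>+z. ennreal (V z) \<partial>measure_pmf Z0) + ennreal (c1 * (\<Sum>k<M. rho1^k))"
proof (induction M)
  case 0 thus ?case by simp
next
  case (Suc M)
  let ?I = "\<integral>\<^sup>+z. ennreal (V z) \<partial>measure_pmf Z0"
  let ?S = "\<Sum>k<M. rho1^k"
  have S0: "0 \<le> ?S" using rho1_nonneg by (simp add: sum_nonneg)
  have "(\<integral>\<^sup>+z. ennreal (V z) \<partial>measure_pmf (scsg n B Gt gt stp Z0 (Suc M)))
      = (\<integral>\<^sup>+z. (\<integral>\<^sup>+y. ennreal (V y) \<partial>measure_pmf (epoch n B Gt gt stp z)) \<partial>measure_pmf (scsg n B Gt gt stp Z0 M))"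
    by simp
  also have "\<dots> \<le> (\<integral>\<^sup>+z. ennreal (rho1 * V z + c1) \<partial>measure_pmf (scsg n B Gt gt stp Z0 M))"
    by (rule nn_integral_mono) (rule epoch_bound)
  also have "\<dots> = (\<integral>\<^sup>+z. ennreal rho1 * ennreal (V z) + ennreal c1 \<partial>measure_pmf (scsg n B Gt gt stp Z0 M))"
    using rho1_nonneg c1_nonneg by (intro nn_integral_cong) (simp add: V_def ennreal_plus ennreal_mult)
  also have "\<dots> = ennreal rho1 * (\<integral>\<^sup>+z. ennreal (V z) \<partial>measure_pmf (scsg n B Gt gt stp Z0 M)) + ennreal c1"
    by (simp add: nn_integral_add nn_integral_cmult measure_pmf.emeasure_space_1)
  also have "\<dots> \<le> ennreal rho1 * (ennreal (rho1^M) * ?I + ennreal (c1 * ?S)) + ennreal c1"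
    by (intro add_right_mono mult_left_mono Suc.IH) auto
  also have "\<dots> = ennreal (rho1^(Suc M)) * ?I + ennreal (c1 * (\<Sum>k<Suc M. rho1^k))"
  proof -
    have "(\<Sum>k<Suc M. rho1^k) = rho1 * ?S + 1"
      by (subst sum.lessThan_Suc_shift) (simp add: sum_distrib_left)
    hence e: "c1 * (\<Sum>k<Suc M. rho1^k) = rho1 * (c1 * ?S) + c1" by (simp add: algebra_simps)
    have m1: "ennreal rho1 * ennreal (rho1^M) = ennreal (rho1^(Suc M))"
    proof -
      have "ennreal (rho1^(Suc M)) = ennreal (rho1 * rho1^M)" by simp
      also have "\<dots> = ennreal rho1 * ennreal (rho1^M)" by (rule ennreal_mult) (use rho1_nonneg in auto)
      finally show ?thesis by simp
    qed
    have m2: "ennreal rho1 * ennreal (c1 * ?S) + ennreal c1 = ennreal (c1 * (\<Sum>k<Suc M. rho1^k))"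
    proof -
      have "ennreal (c1 * (\<Sum>k<Suc M. rho1^k)) = ennreal (rho1 * (c1 * ?S)) + ennreal c1"
        unfolding e by (rule ennreal_plus) (use rho1_nonneg c1_nonneg S0 in auto)
      also have "ennreal (rho1 * (c1 * ?S)) = ennreal rho1 * ennreal (c1 * ?S)"
        by (rule ennreal_mult) (use rho1_nonneg c1_nonneg S0 in auto)
      finally show ?thesis by simp
    qed
    have "ennreal rho1 * (ennreal (rho1^M) * ?I + ennreal (c1 * ?S)) + ennreal c1
        = (ennreal rho1 * ennreal (rho1^M)) * ?I + (ennreal rho1 * ennreal (c1 * ?S) + ennreal c1)"
      by (simp add: distrib_left mult.assoc add.assoc)
    thus ?thesis unfolding m1 m2 .
  qed
  finally show ?case .
qed

end

context scsg_loc begin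

lemma const_le:
  "(spec_norm Q)\<^sup>2 * (c1 / (1 - rho1)) \<le> 3 * stp * (cond_num Q)\<^sup>2 * HH / (lmin * (real B * stp * lmin - 2))"
proof -
  define K0 where "K0 = x / lmin\<^sup>2 * kap\<^sup>2 * HH"
  have K0: "0 \<le> K0" using x_pos HH_nonneg by (simp add: K0_def)
  have b0: "0 < 25/24 * u - 285/144" using u_ge by simp
  have d0: "0 < u - 2" using u_ge by simp
  define bb where "bb = 25/24 * u - 285/144"
  define A where "A = 285/96 * (x / lmin\<^sup>2) * (spec_norm P)\<^sup>2 * HH"
  have h1: "c1 / (1 - rho1) = A / bb"
    unfolding one_minus_rho1 c1_def A_def bb_def using D1_pos by simp
  have h2: "(spec_norm Q)\<^sup>2 * A = 285/96 * K0"
    unfolding A_def K0_def kap_sq by (simp add: mult_ac)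
  have lhs: "(spec_norm Q)\<^sup>2 * (c1 / (1 - rho1)) = (285/96 * K0) / bb"
    by (simp only: h1 times_divide_eq_right h2)
  have rhs: "3 * stp * (cond_num Q)\<^sup>2 * HH / (lmin * (real B * stp * lmin - 2)) = (3 * K0) / (u - 2)"
  proof -
    have "stp = (stp * lmin) / lmin" using lmin_pos by simp
    hence "3 * stp * kap\<^sup>2 * HH / (lmin * (u - 2)) = 3 * (x / lmin\<^sup>2 * kap\<^sup>2 * HH) / (u - 2)"
      using lmin_pos by (simp add: x_def power2_eq_square field_simps)
    thus ?thesis by (simp add: u_eq kapQ K0_def)
  qed
  have "(285/96 * K0) * (u - 2) \<le> (3 * K0) * (25/24 * u - 285/144)"
  proof -
    have "(3 * K0) * (25/24 * u - 285/144) - (285/96 * K0) * (u - 2) = K0 * (15/96 * u)"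
      by (simp add: field_simps)
    moreover have "0 \<le> K0 * (15/96 * u)" using K0 u_ge by simp
    ultimately show ?thesis by linarith
  qed
  hence "(285/96 * K0) / bb \<le> (3 * K0) / (u - 2)"
    unfolding bb_def by (intro frac_le_cross b0 d0)
  thus ?thesis unfolding lhs rhs .
qed

lemma final_loc:
  "(\<integral>\<^sup>+z. ennreal ((norm (z - zs))\<^sup>2) \<partial>measure_pmf (scsg n B Gt gt stp Z0 M))
    \<le> ennreal ((4 / (3 * real B * stp * lmin) + 1/3)^M * (cond_num Q)\<^sup>2)
        * (\<integral>\<^sup>+z. ennreal ((norm (z - zs))\<^sup>2) \<partial>measure_pmf Z0)
      + ennreal (3 * stp * (cond_num Q)\<^sup>2 * HH / (lmin * (real B * stp * lmin - 2)))"
proof -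
  let ?Qn = "(spec_norm Q)\<^sup>2" and ?Pn = "(spec_norm P)\<^sup>2"
  let ?IN = "\<integral>\<^sup>+z. ennreal ((norm (z - zs))\<^sup>2) \<partial>measure_pmf Z0"
  let ?IV = "\<integral>\<^sup>+z. ennreal (V z) \<partial>measure_pmf Z0"
  let ?S = "\<Sum>k<M. rho1^k"
  let ?rho = "4 / (3 * real B * stp * lmin) + 1/3"
  have S0: "0 \<le> ?S" using rho1_nonneg by (simp add: sum_nonneg)
  have V0: "0 \<le> V z" for z by (simp add: V_def)
  have "(\<integral>\<^sup>+z. ennreal ((norm (z - zs))\<^sup>2) \<partial>measure_pmf (scsg n B Gt gt stp Z0 M))
      \<le> (\<integral>\<^sup>+z. ennreal ?Qn * ennreal (V z) \<partial>measure_pmf (scsg n B Gt gt stp Z0 M))"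
  proof (rule nn_integral_mono)
    fix z
    have "(norm (z - zs))\<^sup>2 \<le> ?Qn * V z" unfolding V_def by (rule norm_sq_le_QP)
    hence "ennreal ((norm (z - zs))\<^sup>2) \<le> ennreal (?Qn * V z)" by (rule ennreal_leI)
    also have "\<dots> = ennreal ?Qn * ennreal (V z)" by (rule ennreal_mult) (auto simp: V0)
    finally show "ennreal ((norm (z - zs))\<^sup>2) \<le> ennreal ?Qn * ennreal (V z)" .
  qed
  also have "\<dots> = ennreal ?Qn * (\<integral>\<^sup>+z. ennreal (V z) \<partial>measure_pmf (scsg n B Gt gt stp Z0 M))"
    by (rule nn_integral_cmult) simp
  also have "\<dots> \<le> ennreal ?Qn * (ennreal (rho1^M) * ?IV + ennreal (c1 * ?S))"
    by (intro mult_left_mono scsg_iter) auto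
  also have "?IV \<le> ennreal ?Pn * ?IN"
  proof -
    have "?IV \<le> (\<integral>\<^sup>+z. ennreal ?Pn * ennreal ((norm (z - zs))\<^sup>2) \<partial>measure_pmf Z0)"
    proof (rule nn_integral_mono)
      fix z
      have "V z \<le> ?Pn * (norm (z - zs))\<^sup>2" unfolding V_def by (rule spec_norm_bound_sq)
      hence "ennreal (V z) \<le> ennreal (?Pn * (norm (z - zs))\<^sup>2)" by (rule ennreal_leI)
      also have "\<dots> = ennreal ?Pn * ennreal ((norm (z - zs))\<^sup>2)" by (rule ennreal_mult) auto
      finally show "ennreal (V z) \<le> ennreal ?Pn * ennreal ((norm (z - zs))\<^sup>2)" .
    qed
    also have "\<dots> = ennreal ?Pn * ?IN" by (rule nn_integral_cmult) simp
    finally show ?thesis .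
  qed
  hence "ennreal ?Qn * (ennreal (rho1^M) * ?IV + ennreal (c1 * ?S))
      \<le> ennreal ?Qn * (ennreal (rho1^M) * (ennreal ?Pn * ?IN) + ennreal (c1 * ?S))"
    by (intro mult_left_mono add_right_mono) auto
  also have "\<dots> = ennreal (?Qn * rho1^M * ?Pn) * ?IN + ennreal (?Qn * (c1 * ?S))"
  proof -
    have e1: "ennreal (?Qn * rho1^M * ?Pn) = ennreal ?Qn * ennreal (rho1^M) * ennreal ?Pn"
      using rho1_nonneg by (simp add: ennreal_mult')
    have e2: "ennreal (?Qn * (c1 * ?S)) = ennreal ?Qn * ennreal (c1 * ?S)"
      by (rule ennreal_mult) (use c1_nonneg S0 in auto)
    show ?thesis unfolding e1 e2 by (simp add: distrib_left mult.assoc)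
  qed
  also have "\<dots> \<le> ennreal (?rho^M * (cond_num Q)\<^sup>2) * ?IN
      + ennreal (3 * stp * (cond_num Q)\<^sup>2 * HH / (lmin * (real B * stp * lmin - 2)))"
  proof (intro add_mono mult_right_mono ennreal_leI)
    have "?Qn * rho1^M * ?Pn = rho1^M * kap\<^sup>2" by (simp add: kap_sq mult_ac)
    also have "\<dots> \<le> ?rho^M * kap\<^sup>2"
      by (intro mult_right_mono power_mono rho1_le rho1_nonneg) auto
    finally show "?Qn * rho1^M * ?Pn \<le> ?rho^M * (cond_num Q)\<^sup>2" by (simp add: kapQ)
    have "?Qn * (c1 * ?S) \<le> ?Qn * (c1 * (1 / (1 - rho1)))"
      using c1_nonneg geo_le by (intro mult_left_mono) auto
    also have "\<dots> = ?Qn * (c1 / (1 - rho1))" by simp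
    also have "\<dots> \<le> 3 * stp * (cond_num Q)\<^sup>2 * HH / (lmin * (real B * stp * lmin - 2))" by (rule const_le)
    finally show "?Qn * (c1 * ?S) \<le> 3 * stp * (cond_num Q)\<^sup>2 * HH / (lmin * (real B * stp * lmin - 2))" .
  qed auto
  finally show ?thesis .
qed

end

lemma inner_mv_sym:
  fixes M :: "real^'n^'n"
  assumes "transpose M = M"
  shows "inner x (M *v y) = inner (M *v x) y"
proof -
  have "inner x (M *v y) = inner (x v* M) y" by (simp add: dot_lmul_matrix)
  also have "x v* M = transpose M *v x" by simp
  finally show ?thesis using assms by simp
qed

lemma inner_transpose: "inner x (transpose (A::real^'n^'m) *v y) = inner (A *v x) y"
proof -
  have "inner x (transpose A *v y) = inner (transpose A *v y) x" by (simp add: inner_commute)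
  also have "transpose A *v y = y v* A" by simp
  also have "inner (y v* A) x = inner y (A *v x)" by (simp add: dot_lmul_matrix)
  finally show ?thesis by (simp add: inner_commute)
qed

lemma quad_nonpos_zero:
  fixes r c :: real
  assumes h: "\<And>t. 2 * t * r \<le> t\<^sup>2 * c" and c0: "0 \<le> c"
  shows "r = 0"
proof (rule ccontr)
  assume r: "r \<noteq> 0"
  define t where "t = r / (c + 1)"
  define s where "s = r * r"
  have "0 < r\<^sup>2" using r by simp
  hence s0: "0 < s" by (simp add: s_def power2_eq_square)
  have c1: "c + 1 > 0" using c0 by simp
  have hh: "2 * t * r * (c + 1)\<^sup>2 \<le> t\<^sup>2 * c * (c + 1)\<^sup>2"
    using h[of t] by (intro mult_right_mono) auto
  have tc: "t * (c + 1) = r" using c1 by (simp add: t_def)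
  have e1: "2 * t * r * (c + 1)\<^sup>2 = 2 * (s * c) + 2 * s"
  proof -
    have "2 * t * r * (c + 1)\<^sup>2 = 2 * r * (t * (c + 1)) * (c + 1)" by (simp add: power2_eq_square mult_ac)
    also have "\<dots> = 2 * (s * c) + 2 * s" unfolding tc by (simp add: s_def algebra_simps)
    finally show ?thesis .
  qed
  have e2: "t\<^sup>2 * c * (c + 1)\<^sup>2 = s * c"
  proof -
    have "t\<^sup>2 * c * (c + 1)\<^sup>2 = c * (t * (c + 1)) * (t * (c + 1))" by (simp add: power2_eq_square mult_ac)
    also have "\<dots> = s * c" unfolding tc by (simp add: s_def mult_ac)
    finally show ?thesis .
  qed
  have "0 \<le> s * c" using s0 c0 by simp
  thus False using hh e1 e2 s0 by linarith
qed

lemma sym_eig_exists: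
  fixes M :: "real^'n^'n"
  assumes sym: "transpose M = M"
  shows "\<exists>l v. v \<noteq> 0 \<and> M *v v = l *\<^sub>R v"
proof -
  let ?f = "\<lambda>v::real^'n. inner v (M *v v)"
  obtain i :: 'n where True by simp
  have ne: "sphere (0::real^'n) 1 \<noteq> {}"
    by (metis (no_types) dist_0_norm empty_iff mem_sphere norm_axis_1)
  have cont: "continuous_on (sphere (0::real^'n) 1) ?f"
    by (intro continuous_intros linear_continuous_on) (simp add: bounded_linear_def)
  obtain v0 where v0: "v0 \<in> sphere 0 1" and mx: "\<And>y. y \<in> sphere 0 1 \<Longrightarrow> ?f y \<le> ?f v0"
    using continuous_attains_sup[OF compact_sphere ne cont] by blast
  define m where "m = ?f v0"
  have nv0: "norm v0 = 1" using v0 by simp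
  have bound: "?f w \<le> m * (norm w)\<^sup>2" for w
  proof (cases "w = 0")
    case True thus ?thesis by simp
  next
    case False
    define y where "y = (1 / norm w) *\<^sub>R w"
    have "y \<in> sphere 0 1" using False by (simp add: y_def)
    hence "?f y \<le> m" using mx by (simp add: m_def)
    moreover have "?f y = ?f w / (norm w)\<^sup>2"
      by (simp add: y_def matrix_vector_mult_scaleR power2_eq_square)
    ultimately show ?thesis using False by (simp add: divide_le_eq mult.commute)
  qed
  have r0: "inner w (M *v v0 - m *\<^sub>R v0) = 0" for w
  proof (rule quad_nonpos_zero)
    show "0 \<le> m * (norm w)\<^sup>2 - ?f w" using bound[of w] by simp
    fix t :: real
    have "?f (v0 + t *\<^sub>R w) \<le> m * (norm (v0 + t *\<^sub>R w))\<^sup>2" by (rule bound)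
    moreover have "?f (v0 + t *\<^sub>R w) = m + 2 * t * inner w (M *v v0) + t\<^sup>2 * ?f w"
    proof -
      have sy: "inner v0 (M *v w) = inner w (M *v v0)"
        using inner_mv_sym[OF sym, of v0 w] by (simp add: inner_commute)
      have "?f (v0 + t *\<^sub>R w) = ?f v0 + t * inner v0 (M *v w) + t * inner w (M *v v0) + (t * t) * ?f w"
        by (simp add: matrix_vector_right_distrib matrix_vector_mult_scaleR inner_add_left inner_add_right distrib_left mult.assoc)
      thus ?thesis unfolding sy by (simp add: m_def power2_eq_square)
    qed
    moreover have "(norm (v0 + t *\<^sub>R w))\<^sup>2 = 1 + 2 * t * inner w v0 + t\<^sup>2 * (norm w)\<^sup>2"
    proof -
      have iv0: "inner v0 v0 = 1" using nv0 by (metis power2_norm_eq_inner one_power2)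
      have "(norm (v0 + t *\<^sub>R w))\<^sup>2 = inner v0 v0 + t * inner w v0 + t * inner w v0 + (t * t) * inner w w"
        by (simp add: power2_norm_eq_inner inner_add_left inner_add_right inner_commute)
      thus ?thesis using iv0 by (simp add: power2_norm_eq_inner[symmetric] power2_eq_square)
    qed
    ultimately have "m + 2 * t * inner w (M *v v0) + t\<^sup>2 * ?f w \<le> m * (1 + 2 * t * inner w v0 + t\<^sup>2 * (norm w)\<^sup>2)"
      by simp
    thus "2 * t * inner w (M *v v0 - m *\<^sub>R v0) \<le> t\<^sup>2 * (m * (norm w)\<^sup>2 - ?f w)"
      by (simp add: inner_diff_right algebra_simps)
  qed
  have "inner (M *v v0 - m *\<^sub>R v0) (M *v v0 - m *\<^sub>R v0) = 0" by (rule r0)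
  hence "M *v v0 = m *\<^sub>R v0" by simp
  moreover have "v0 \<noteq> 0" using nv0 by auto
  ultimately show ?thesis by blast
qed

lemma sym_eig_finite:
  fixes M :: "real^'n^'n"
  assumes sym: "transpose M = M"
  shows "finite (real_eigenvalues M)"
proof -
  let ?E = "real_eigenvalues M"
  define ev where "ev l = (SOME v. v \<noteq> 0 \<and> M *v v = l *\<^sub>R v)" for l
  have ev: "ev l \<noteq> 0 \<and> M *v ev l = l *\<^sub>R ev l" if "l \<in> ?E" for l
  proof -
    have "\<exists>v. v \<noteq> 0 \<and> M *v v = l *\<^sub>R v" using that by (simp add: real_eigenvalues_def)
    from someI_ex[OF this] show ?thesis unfolding ev_def .
  qed
  have inj: "inj_on ev ?E"
  proof (rule inj_onI)
    fix l1 l2 assume l1: "l1 \<in> ?E" and l2: "l2 \<in> ?E" and e: "ev l1 = ev l2"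
    have a: "M *v ev l1 = l1 *\<^sub>R ev l1" using ev[OF l1] by (rule conjunct2)
    have b: "M *v ev l1 = l2 *\<^sub>R ev l1" using ev[OF l2] e by simp
    have "l1 *\<^sub>R ev l1 = l2 *\<^sub>R ev l1" using a b by metis
    moreover have "ev l1 \<noteq> 0" using ev[OF l1] by (rule conjunct1)
    ultimately show "l1 = l2" using scaleR_cancel_right by blast
  qed
  have orth: "pairwise orthogonal (ev ` ?E)"
    unfolding pairwise_def
  proof (intro ballI impI)
    fix a b assume a: "a \<in> ev ` ?E" and b: "b \<in> ev ` ?E" and ne: "a \<noteq> b"
    obtain l1 where l1: "l1 \<in> ?E" and a1: "a = ev l1" using a by blast
    obtain l2 where l2: "l2 \<in> ?E" and b2: "b = ev l2" using b by blast
    have ln: "l1 \<noteq> l2" using ne a1 b2 by auto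
    have m1: "M *v a = l1 *\<^sub>R a" using ev[OF l1] a1 by simp
    have m2: "M *v b = l2 *\<^sub>R b" using ev[OF l2] b2 by simp
    have "l1 * inner a b = inner (M *v a) b" using m1 by simp
    also have "\<dots> = inner a (M *v b)" using inner_mv_sym[OF sym, of a b] by simp
    also have "\<dots> = l2 * inner a b" using m2 by simp
    finally have "(l1 - l2) * inner a b = 0" by (simp add: algebra_simps)
    thus "orthogonal a b" using ln by (simp add: orthogonal_def)
  qed
  have z: "0 \<notin> ev ` ?E"
  proof
    assume "0 \<in> ev ` ?E"
    then obtain l where l: "l \<in> ?E" and "0 = ev l" by auto
    thus False using ev[OF l] by simp
  qed
  have "independent (ev ` ?E)" by (rule pairwise_orthogonal_independent[OF orth z])
  hence "finite (ev ` ?E)" by (rule finiteI_independent)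
  thus ?thesis using inj finite_imageD by blast
qed

lemma pd_eig_pos:
  assumes "pos_def M" "l \<in> real_eigenvalues M"
  shows "0 < l"
proof -
  obtain v where v: "v \<noteq> 0" "M *v v = l *\<^sub>R v" using assms(2) by (auto simp: real_eigenvalues_def)
  have "0 < inner v (M *v v)" using assms(1) v(1) unfolding pos_def_def by blast
  also have "inner v (M *v v) = l * (norm v)\<^sup>2" using v by (simp add: power2_norm_eq_inner)
  finally show ?thesis using v by (simp add: zero_less_mult_iff)
qed

lemma sym_pd_lam_pos:
  fixes M :: "real^'n^'n"
  assumes "transpose M = M" "pos_def M"
  shows "0 < lam_min M" "0 < lam_max M"
proof -
  have fin: "finite (real_eigenvalues M)" by (rule sym_eig_finite[OF assms(1)])
  have ne: "real_eigenvalues M \<noteq> {}"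
    using sym_eig_exists[OF assms(1)] by (auto simp: real_eigenvalues_def)
  have "lam_min M \<in> real_eigenvalues M" unfolding lam_min_def using fin ne by (rule Min_in)
  thus "0 < lam_min M" using pd_eig_pos[OF assms(2)] by blast
  have "lam_max M \<in> real_eigenvalues M" unfolding lam_max_def using fin ne by (rule Max_in)
  thus "0 < lam_max M" using pd_eig_pos[OF assms(2)] by blast
qed

lemma sum_UNIV_plus:
  "(\<Sum>i\<in>(UNIV::('a::finite + 'b::finite) set). f i) = (\<Sum>a\<in>UNIV. f (Inl a)) + (\<Sum>b\<in>UNIV. f (Inr b))"
proof -
  have "(\<Sum>i\<in>(UNIV::('a + 'b) set). f i) = (\<Sum>i\<in>(UNIV <+> UNIV). f i)" by simp
  also have "\<dots> = (\<Sum>a\<in>UNIV. f (Inl a)) + (\<Sum>b\<in>UNIV. f (Inr b))"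
    by (subst sum.Plus) (auto simp: comp_def)
  finally show ?thesis .
qed

lemma avg_vec: "(avg n f) $ i = (\<Sum>t=1..n. f t $ i) / real n"
  for f :: "nat \<Rightarrow> real^'n"
  by (simp add: avg_def sum_component divide_inverse mult.commute)

lemma avg_mat: "(avg n f) $ i $ j = (\<Sum>t=1..n. f t $ i $ j) / real n"
  for f :: "nat \<Rightarrow> real^'n^'m"
  by (simp add: avg_def sum_component divide_inverse mult.commute)

lemma Gblk_avg: "avg n (\<lambda>t. Gblk beta (A t) (C t)) = Gblk beta (avg n A) (avg n C)"
proof -
  have "(avg n (\<lambda>t. Gblk beta (A t) (C t))) $ i $ j = (Gblk beta (avg n A) (avg n C)) $ i $ j" for i j
    by (cases i; cases j) (simp_all add: avg_mat Gblk_def sum_distrib_left[symmetric] sum_negf)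
  thus ?thesis by (simp add: vec_eq_iff)
qed

lemma gblk_avg: "avg n (\<lambda>t. gblk beta (b t)) = gblk beta (avg n b)"
proof -
  have "(avg n (\<lambda>t. gblk beta (b t))) $ i = (gblk beta (avg n b)) $ i" for i
    by (cases i) (simp_all add: avg_vec gblk_def sum_distrib_left[symmetric])
  thus ?thesis by (simp add: vec_eq_iff)
qed

definition "xv (z::real^('d::finite+'d)) = (\<chi> a. z $ Inl a)"
definition "yv (z::real^('d::finite+'d)) = (\<chi> a. z $ Inr a)"

lemma Gblk_mult:
  "Gblk beta A C *v z = (\<chi> i. case i of Inl a \<Rightarrow> - sqrt beta * (transpose A *v yv z) $ a
                                    | Inr a \<Rightarrow> sqrt beta * (A *v xv z) $ a + beta * (C *v yv z) $ a)"
proof -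
  have "(Gblk beta A C *v z) $ i = (case i of Inl a \<Rightarrow> - sqrt beta * (transpose A *v yv z) $ a
                                    | Inr a \<Rightarrow> sqrt beta * (A *v xv z) $ a + beta * (C *v yv z) $ a)" for i
  proof (cases i)
    case (Inl a)
    have "(Gblk beta A C *v z) $ i = (\<Sum>c\<in>UNIV. - sqrt beta * A $ c $ a * z $ Inr c)"
      unfolding matrix_vector_mult_def using Inl by (simp add: sum_UNIV_plus Gblk_def)
    also have "\<dots> = - sqrt beta * (transpose A *v yv z) $ a"
      by (simp add: matrix_vector_mult_def transpose_def yv_def sum_distrib_left sum_negf mult.assoc)
    finally show ?thesis using Inl by simp
  next
    case (Inr a)
    have "(Gblk beta A C *v z) $ i = (\<Sum>c\<in>UNIV. sqrt beta * A $ a $ c * z $ Inl c) + (\<Sum>c\<in>UNIV. beta * C $ a $ c * z $ Inr c)"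
      unfolding matrix_vector_mult_def using Inr by (simp add: sum_UNIV_plus Gblk_def)
    also have "\<dots> = sqrt beta * (A *v xv z) $ a + beta * (C *v yv z) $ a"
      by (simp add: matrix_vector_mult_def xv_def yv_def sum_distrib_left mult.assoc)
    finally show ?thesis using Inr by simp
  qed
  thus ?thesis by (simp add: vec_eq_iff)
qed

lemma xv_zvec: "xv (zvec beta th om) = th" by (simp add: xv_def zvec_def vec_eq_iff)
lemma yv_zvec0: "yv (zvec beta th 0) = 0" by (simp add: yv_def zvec_def vec_eq_iff)

lemma inv_mult_right: "invertible A \<Longrightarrow> A *v (matrix_inv A *v b) = (b::real^'n)"
  by (simp add: matrix_vector_mul_assoc matrix_inv_both)

lemma Gz_star:
  assumes "invertible A"
  shows "Gblk beta A C *v zvec beta (matrix_inv A *v b) 0 = gblk beta b"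
  by (simp add: Gblk_mult xv_zvec yv_zvec0 inv_mult_right[OF assms] gblk_def vec_eq_iff split: sum.splits)

lemma z_split_zero: "(z::real^('d::finite+'d)) = 0 \<longleftrightarrow> xv z = 0 \<and> yv z = 0"
proof
  assume "xv z = 0 \<and> yv z = 0"
  hence "z $ Inl a = 0" "z $ Inr a = 0" for a by (auto simp: xv_def yv_def vec_eq_iff)
  thus "z = 0" by (simp add: vec_eq_iff) (metis sum.exhaust)
qed (simp_all add: xv_def yv_def vec_eq_iff)

lemma inner_split: "inner (z::real^('d::finite+'d)) w = inner (xv z) (xv w) + inner (yv z) (yv w)"
  by (simp add: inner_vec_def sum_UNIV_plus xv_def yv_def)

lemma G_eig_pos:
  assumes beta: "0 < beta" and A: "invertible A" and C: "pos_def C"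
    and l: "l \<in> real_eigenvalues (Gblk beta A C)"
  shows "0 < l"
proof -
  obtain z where z0: "z \<noteq> 0" and ez: "Gblk beta A C *v z = l *\<^sub>R z"
    using l by (auto simp: real_eigenvalues_def)
  let ?x = "xv z" and ?y = "yv z"
  have sb: "0 < sqrt beta" using beta by simp
  have gx: "- sqrt beta * (transpose A *v ?y) $ a = l * ?x $ a" for a
    using arg_cong[OF ez, of "\<lambda>v. v $ Inl a"] by (simp add: Gblk_mult xv_def)
  have gy: "sqrt beta * (A *v ?x) $ a + beta * (C *v ?y) $ a = l * ?y $ a" for a
    using arg_cong[OF ez, of "\<lambda>v. v $ Inr a"] by (simp add: Gblk_mult yv_def)
  have y0: "?y \<noteq> 0"
  proof
    assume y: "?y = 0"
    have "sqrt beta * (A *v ?x) $ a = 0" for a using gy[of a] y by simp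
    hence "A *v ?x = 0" using sb by (simp add: vec_eq_iff)
    hence "?x = 0" using A by (metis inj_matrix_vector_mult matrix_vector_mult_0_right injD)
    thus False using y z0 z_split_zero by blast
  qed
  have xg: "xv (Gblk beta A C *v z) = - sqrt beta *\<^sub>R (transpose A *v ?y)"
    by (simp add: Gblk_mult vec_eq_iff xv_def yv_def)
  have yg: "yv (Gblk beta A C *v z) = sqrt beta *\<^sub>R (A *v ?x) + beta *\<^sub>R (C *v ?y)"
    by (simp add: Gblk_mult vec_eq_iff xv_def yv_def)
  have "inner z (Gblk beta A C *v z)
      = inner ?x (- sqrt beta *\<^sub>R (transpose A *v ?y)) + inner ?y (sqrt beta *\<^sub>R (A *v ?x) + beta *\<^sub>R (C *v ?y))"
    unfolding inner_split xg yg ..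
  also have "\<dots> = beta * inner ?y (C *v ?y)"
  proof -
    have tr: "inner ?x (?y v* A) = inner ?y (A *v ?x)" by (metis dot_lmul_matrix inner_commute)
    show ?thesis by (simp add: inner_add_right tr)
  qed
  finally have q: "inner z (Gblk beta A C *v z) = beta * inner ?y (C *v ?y)" .
  have "0 < inner ?y (C *v ?y)" using C y0 by (simp add: pos_def_def)
  hence "0 < l * (norm z)\<^sup>2" using q ez beta by (simp add: power2_norm_eq_inner)
  thus ?thesis using z0 by (simp add: zero_less_mult_iff)
qed

lemma eig_diag:
  fixes G Q Lam :: "real^'n^'n"
  assumes Q: "invertible Q" and L: "diagonal_mat Lam" and G: "G = Q ** Lam ** matrix_inv Q"
  shows "real_eigenvalues G = range (\<lambda>i. Lam $ i $ i)"
proof -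
  define P where "P = matrix_inv Q"
  have PQ: "P ** Q = mat 1" "Q ** P = mat 1" using matrix_inv_both[OF Q] by (auto simp: P_def)
  have Lm: "Lam *v v = (\<chi> i. Lam $ i $ i * v $ i)" for v
  proof -
    have "(Lam *v v) $ i = Lam $ i $ i * v $ i" for i
    proof -
      have "(Lam *v v) $ i = (\<Sum>j\<in>UNIV. Lam $ i $ j * v $ j)" by (simp add: matrix_vector_mult_def)
      also have "\<dots> = (\<Sum>j\<in>UNIV. if j = i then Lam $ i $ i * v $ j else 0)"
        by (intro sum.cong refl) (use L in \<open>auto simp: diagonal_mat_def\<close>)
      also have "\<dots> = Lam $ i $ i * v $ i" by simp
      finally show ?thesis .
    qed
    thus ?thesis by (simp add: vec_eq_iff)
  qed
  show ?thesis
  proof (intro equalityI subsetI)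
    fix l assume "l \<in> real_eigenvalues G"
    then obtain v where v0: "v \<noteq> 0" and ev: "G *v v = l *\<^sub>R v" by (auto simp: real_eigenvalues_def)
    have "P *v (G *v v) = Lam *v (P *v v)"
      by (simp add: G P_def[symmetric] matrix_vector_mul_assoc matrix_mul_assoc PQ)
    hence e: "Lam *v (P *v v) = l *\<^sub>R (P *v v)" using ev by (simp add: matrix_vector_mult_scaleR)
    have "P *v v \<noteq> 0"
    proof
      assume "P *v v = 0"
      hence "Q *v (P *v v) = 0" by simp
      thus False using v0 by (simp add: matrix_vector_mul_assoc PQ)
    qed
    then obtain i where i: "(P *v v) $ i \<noteq> 0" by (auto simp: vec_eq_iff)
    have "Lam $ i $ i * (P *v v) $ i = l * (P *v v) $ i"
      using arg_cong[OF e, of "\<lambda>w. w $ i"] by (simp add: Lm)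
    hence "l = Lam $ i $ i" using i by simp
    thus "l \<in> range (\<lambda>i. Lam $ i $ i)" by blast
  next
    fix l assume "l \<in> range (\<lambda>i. Lam $ i $ i)"
    then obtain i where li: "l = Lam $ i $ i" by blast
    define v where "v = Q *v axis i (1::real)"
    have "P *v v = axis i 1" by (simp add: v_def matrix_vector_mul_assoc PQ)
    hence v0: "v \<noteq> 0" by (metis axis_eq_0_iff matrix_vector_mult_0_right zero_neq_one)
    have "Q ** Lam ** P ** Q = Q ** Lam" by (simp add: matrix_mul_assoc[symmetric] PQ)
    hence "G *v v = (Q ** Lam) *v axis i 1"
      by (simp add: G v_def P_def[symmetric] matrix_vector_mul_assoc)
    also have "\<dots> = Q *v (Lam *v axis i 1)" by (simp add: matrix_vector_mul_assoc)
    also have "Lam *v axis i 1 = l *\<^sub>R axis i 1" by (simp add: Lm li vec_eq_iff axis_def)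
    finally have "G *v v = l *\<^sub>R v" by (simp add: v_def matrix_vector_mult_scaleR)
    thus "l \<in> real_eigenvalues G" using v0 by (auto simp: real_eigenvalues_def)
  qed
qed

lemma cond_num_ge1:
  fixes Q :: "real^'n^'n"
  assumes Q: "invertible Q"
  shows "1 \<le> cond_num Q"
proof -
  obtain i :: 'n where True by simp
  define v :: "real^'n" where "v = axis i 1"
  have v0: "norm v > 0" by (simp add: v_def)
  have "norm v = norm (Q *v (matrix_inv Q *v v))"
    by (simp add: matrix_vector_mul_assoc matrix_inv_both[OF Q])
  also have "\<dots> \<le> spec_norm Q * norm (matrix_inv Q *v v)" by (rule spec_norm_bound)
  also have "\<dots> \<le> spec_norm Q * (spec_norm (matrix_inv Q) * norm v)"
    by (intro mult_left_mono spec_norm_bound spec_norm_nonneg)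
  finally have "1 * norm v \<le> (spec_norm Q * spec_norm (matrix_inv Q)) * norm v" by simp
  hence "1 \<le> spec_norm Q * spec_norm (matrix_inv Q)" using v0 by (simp only: mult_le_cancel_right)
  thus ?thesis by (simp add: cond_num_def)
qed

lemma LG2_sum_bound:
  fixes Gt :: "nat \<Rightarrow> real^'n^'n"
  assumes n: "0 < n"
  shows "(\<Sum>t\<in>{1..n}. (norm (Gt t *v w))\<^sup>2) \<le> real n * spec_norm (avg n (\<lambda>t. transpose (Gt t) ** Gt t)) * (norm w)\<^sup>2"
proof -
  define M where "M = avg n (\<lambda>t. transpose (Gt t) ** Gt t)"
  have Ms: "(\<Sum>t\<in>{1..n}. transpose (Gt t) ** Gt t) = real n *\<^sub>R M" using n by (simp add: M_def avg_def)
  have e: "(norm (Gt t *v w))\<^sup>2 = inner w ((transpose (Gt t) ** Gt t) *v w)" for t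
  proof -
    have "inner w (transpose (Gt t) *v (Gt t *v w)) = inner (Gt t *v w) (Gt t *v w)" by (rule inner_transpose)
    thus ?thesis by (simp add: power2_norm_eq_inner matrix_vector_mul_assoc)
  qed
  have "(\<Sum>t\<in>{1..n}. (norm (Gt t *v w))\<^sup>2) = inner w ((\<Sum>t\<in>{1..n}. transpose (Gt t) ** Gt t) *v w)"
    by (simp add: e sum_matrix_vector inner_sum_right)
  also have "\<dots> = real n * inner w (M *v w)"
    unfolding Ms by (simp add: scaleR_matrix_vector_assoc[symmetric])
  also have "\<dots> \<le> real n * (norm w * norm (M *v w))"
    by (intro mult_left_mono norm_cauchy_schwarz) auto
  also have "\<dots> \<le> real n * (norm w * (spec_norm M * norm w))"
    by (intro mult_left_mono spec_norm_bound) auto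
  finally show ?thesis by (simp add: M_def power2_eq_square mult_ac)
qed

lemma mean_sq_le_sum:
  fixes Gt :: "nat \<Rightarrow> real^'n^'n"
  assumes n: "0 < n"
  shows "(norm (avg n Gt *v w))\<^sup>2 \<le> (\<Sum>t\<in>{1..n}. (norm (Gt t *v w))\<^sup>2) / real n"
proof -
  have ne: "{1..n} \<noteq> {}" using n by auto
  have "avg n Gt *v w = (1 / real (card {1..n})) *\<^sub>R (\<Sum>t\<in>{1..n}. Gt t *v w)"
    by (simp add: avg_def scaleR_matrix_vector_assoc[symmetric] sum_matrix_vector)
  moreover have "real (card {1..n}) * (norm ((1 / real (card {1..n})) *\<^sub>R (\<Sum>t\<in>{1..n}. Gt t *v w)))\<^sup>2
      \<le> (\<Sum>t\<in>{1..n}. (norm (Gt t *v w))\<^sup>2)"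
    by (rule mean_norm_sq_le) (use ne in auto)
  ultimately show ?thesis using n by (simp add: le_divide_eq mult.commute)
qed

lemma theta_bound:
  fixes z zs :: "real^('d::finite + 'd)"
  shows "(norm (theta_part z - theta_part zs))\<^sup>2 \<le> (norm (z - zs))\<^sup>2"
proof -
  have "(norm (theta_part z - theta_part zs))\<^sup>2 = (\<Sum>a\<in>UNIV. ((z - zs) $ Inl a)\<^sup>2)"
    by (simp add: norm_sq_vec theta_part_def)
  also have "\<dots> \<le> (\<Sum>a\<in>UNIV. ((z - zs) $ Inl a)\<^sup>2) + (\<Sum>a\<in>UNIV. ((z - zs) $ Inr a)\<^sup>2)"
    by (simp add: sum_nonneg)
  also have "\<dots> = (norm (z - zs))\<^sup>2" by (simp add: norm_sq_vec sum_UNIV_plus)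
  finally show ?thesis .
qed

lemma theta_zvec: "theta_part (zvec beta th om) = th"
  by (simp add: theta_part_def zvec_def vec_eq_iff)

lemma transpose_avg_outer: "transpose (avg n (\<lambda>t. outer (u t) (u t))) = avg n (\<lambda>t. outer (u t) (u t))"
  by (simp add: vec_eq_iff transpose_def avg_mat outer_def mult.commute)

lemma pd_invertible:
  fixes C :: "real^'n^'n"
  assumes "pos_def C"
  shows "invertible C"
proof -
  have "\<forall>x. C *v x = 0 \<longrightarrow> x = 0"
  proof (intro allI impI)
    fix x assume "C *v x = 0"
    hence "inner x (C *v x) = 0" by simp
    thus "x = 0" using assms unfolding pos_def_def by (metis less_irrefl)
  qed
  thus ?thesis by (simp add: invertible_left_inverse matrix_left_invertible_ker)
qed

lemma inv_sym:
  fixes C :: "real^'n^'n"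
  assumes C: "invertible C" and sym: "transpose C = C"
  shows "transpose (matrix_inv C) = matrix_inv C"
proof -
  let ?Ci = "matrix_inv C"
  have h: "C ** ?Ci = mat 1" "?Ci ** C = mat 1" using matrix_inv_both[OF C] by auto
  have "transpose (C ** ?Ci) = mat 1" using h by simp
  hence t: "transpose ?Ci ** C = mat 1" by (simp add: matrix_transpose_mul sym)
  have "transpose ?Ci = transpose ?Ci ** (C ** ?Ci)" using h by simp
  also have "\<dots> = (transpose ?Ci ** C) ** ?Ci" by (simp add: matrix_mul_assoc)
  also have "\<dots> = ?Ci" using t by simp
  finally show ?thesis .
qed

lemma inv_pd:
  fixes C :: "real^'n^'n"
  assumes C: "pos_def C" and sym: "transpose C = C"
  shows "pos_def (matrix_inv C)"
  unfolding pos_def_def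
proof (intro allI impI)
  fix w :: "real^'n" assume w: "w \<noteq> 0"
  have Ci: "invertible C" by (rule pd_invertible[OF C])
  define y where "y = matrix_inv C *v w"
  have wy: "w = C *v y" by (simp add: y_def matrix_vector_mul_assoc matrix_inv_both[OF Ci])
  have "y \<noteq> 0" using w wy by auto
  hence "0 < inner y (C *v y)" using C by (simp add: pos_def_def)
  also have "inner y (C *v y) = inner w (matrix_inv C *v w)"
    by (simp add: wy[symmetric] y_def[symmetric] inner_commute)
  finally show "0 < inner w (matrix_inv C *v w)" .
qed

lemma AtCA_sym_pd:
  fixes A Ci :: "real^'n^'n"
  assumes A: "invertible A" and Ci: "pos_def Ci" and sym: "transpose Ci = Ci"
  shows "transpose (transpose A ** Ci ** A) = transpose A ** Ci ** A" "pos_def (transpose A ** Ci ** A)"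
proof -
  show "transpose (transpose A ** Ci ** A) = transpose A ** Ci ** A"
    by (simp add: matrix_transpose_mul sym matrix_mul_assoc)
  show "pos_def (transpose A ** Ci ** A)"
    unfolding pos_def_def
  proof (intro allI impI)
    fix v :: "real^'n" assume v: "v \<noteq> 0"
    have "A *v v \<noteq> 0" using v A by (metis inj_matrix_vector_mult matrix_vector_mult_0_right injD)
    hence "0 < inner (A *v v) (Ci *v (A *v v))" using Ci by (simp add: pos_def_def)
    also have "inner (A *v v) (Ci *v (A *v v)) = inner v ((transpose A ** Ci ** A) *v v)"
      by (simp add: inner_transpose[symmetric] matrix_vector_mul_assoc[symmetric])
    finally show "0 < inner v ((transpose A ** Ci ** A) *v v)" .
  qed
qed

theorem theorem2:
  fixes phi :: "'s \<Rightarrow> real^'d"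
    and s :: "nat \<Rightarrow> 's" and r :: "nat \<Rightarrow> real" and disc :: real
    and n B M :: nat
    and Ah Ch :: "real^'d^'d" and bh theta_star :: "real^'d"
    and beta stp lmin LG2 HH :: real
    and Gt :: "nat \<Rightarrow> real^('d + 'd)^('d + 'd)" and gt :: "nat \<Rightarrow> real^('d + 'd)"
    and G Q Lam :: "real^('d + 'd)^('d + 'd)" and z_star :: "real^('d + 'd)"
    and Z0 :: "(real^('d + 'd)) pmf"
  assumes Ah_def: "Ah = avg n (A_t phi disc s)"
    and bh_def: "bh = avg n (b_t phi r s)"
    and Ch_def: "Ch = avg n (C_t phi s)"
    and invA: "invertible Ah"
    and posC: "pos_def Ch"
    and beta_def: "beta = 8 * lam_max (transpose Ah ** matrix_inv Ch ** Ah) / lam_min Ch"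
    and Gt_def: "Gt = (\<lambda>t. Gblk beta (A_t phi disc s t) (C_t phi s t))"
    and gt_def: "gt = (\<lambda>t. gblk beta (b_t phi r s t))"
    and G_def: "G = avg n Gt"
    and theta_star_def: "theta_star = matrix_inv Ah *v bh"
    and z_star_def: "z_star = zvec beta theta_star 0"
    and Q: "invertible Q" and Lam: "diagonal_mat Lam" and diag: "G = Q ** Lam ** matrix_inv Q"
    and lmin_def: "lmin = lam_min G"
    and LG2_def: "LG2 = spec_norm (avg n (\<lambda>t. transpose (Gt t) ** Gt t))"
    and HH_def: "HH = avg n (\<lambda>t. (norm (Gt t *v z_star - gt t))\<^sup>2)"
    and stp_def: "stp = lmin / (6 * (cond_num Q)\<^sup>2 * LG2)"
    and B_large: "real B \<ge> 4 / (stp * lmin)"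
    and B_lt_n: "B < n"
  shows "(\<integral>\<^sup>+ z. ennreal ((norm (theta_part z - theta_star))\<^sup>2) \<partial>measure_pmf (scsg n B Gt gt stp Z0 M))
    \<le> ennreal ((4 / (3 * real B * stp * lmin) + 1 / 3) ^ M * (cond_num Q)\<^sup>2)
        * (\<integral>\<^sup>+ z. ennreal ((norm (z - z_star))\<^sup>2) \<partial>measure_pmf Z0)
      + ennreal (3 * stp * (cond_num Q)\<^sup>2 * HH / (lmin * (real B * stp * lmin - 2)))"
proof -
  have n_pos: "0 < n" using B_lt_n by simp
  have Csym: "transpose Ch = Ch" unfolding Ch_def C_t_def by (rule transpose_avg_outer)
  have Cinv: "invertible Ch" by (rule pd_invertible[OF posC])
  have Cisym: "transpose (matrix_inv Ch) = matrix_inv Ch" by (rule inv_sym[OF Cinv Csym])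
  have Cipd: "pos_def (matrix_inv Ch)" by (rule inv_pd[OF posC Csym])
  note Mfacts = AtCA_sym_pd[OF invA Cipd Cisym]
  have beta_pos: "0 < beta"
    using sym_pd_lam_pos(2)[OF Mfacts] sym_pd_lam_pos(1)[OF Csym posC] unfolding beta_def by simp
  have G_eq: "G = Gblk beta Ah Ch" unfolding G_def Gt_def Ah_def Ch_def by (rule Gblk_avg)
  have g_eq: "avg n gt = gblk beta bh" unfolding gt_def bh_def by (rule gblk_avg)
  have opt: "avg n Gt *v z_star = avg n gt"
    unfolding G_def[symmetric] G_eq g_eq z_star_def theta_star_def by (rule Gz_star[OF invA])
  have eig: "real_eigenvalues G = range (\<lambda>i. Lam $ i $ i)" by (rule eig_diag[OF Q Lam diag])
  have lam_pos: "0 < Lam $ i $ i" for i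
  proof -
    have "Lam $ i $ i \<in> real_eigenvalues (Gblk beta Ah Ch)" using eig G_eq by auto
    thus ?thesis by (rule G_eig_pos[OF beta_pos invA posC])
  qed
  have lmin_eq: "lmin = Min (range (\<lambda>i. Lam $ i $ i))" by (simp add: lmin_def lam_min_def eig)
  have lam_ge: "lmin \<le> Lam $ i $ i" for i unfolding lmin_eq by (rule Min_le) auto
  have "lmin \<in> range (\<lambda>i. Lam $ i $ i)" unfolding lmin_eq by (rule Min_in) auto
  hence lmin_pos: "0 < lmin" using lam_pos by auto
  have LGb: "(\<Sum>t\<in>{1..n}. (norm (Gt t *v w))\<^sup>2) \<le> real n * LG2 * (norm w)\<^sup>2" for w
    unfolding LG2_def by (rule LG2_sum_bound[OF n_pos])
  have LG0: "0 \<le> LG2" unfolding LG2_def by (rule spec_norm_nonneg)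
  have Gsq: "(norm (G *v w))\<^sup>2 \<le> LG2 * (norm w)\<^sup>2" for w
  proof -
    have "(norm (G *v w))\<^sup>2 \<le> (\<Sum>t\<in>{1..n}. (norm (Gt t *v w))\<^sup>2) / real n"
      unfolding G_def by (rule mean_sq_le_sum[OF n_pos])
    also have "\<dots> \<le> real n * LG2 * (norm w)\<^sup>2 / real n" by (intro divide_right_mono LGb) auto
    finally show ?thesis using n_pos by simp
  qed
  have lmin_small: "4 * lmin\<^sup>2 \<le> LG2"
  proof -
    define P where "P = matrix_inv Q"
    have PQ: "P ** Q = mat 1" using matrix_inv_both[OF Q] by (simp add: P_def)
    have "trace G = trace ((Q ** Lam) ** P)" by (simp add: diag P_def)
    also have "\<dots> = trace (P ** (Q ** Lam))" by (rule trace_mul_sym)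
    also have "\<dots> = trace Lam" by (simp add: matrix_mul_assoc PQ)
    finally have trG: "trace G = (\<Sum>i\<in>UNIV. Lam $ i $ i)" by (simp add: trace_def)
    have diagG: "G $ i $ i \<le> sqrt LG2" for i
    proof -
      have "G $ i $ i = (G *v axis i 1) $ i" by (simp add: matrix_vector_mult_basis column_def)
      also have "\<dots> \<le> norm (G *v axis i 1)" by (metis abs_ge_self component_le_norm_cart order_trans)
      also have "\<dots> \<le> sqrt LG2"
      proof -
        have "(norm (G *v axis i 1))\<^sup>2 \<le> LG2" using Gsq[of "axis i 1"] by simp
        thus ?thesis by (simp add: real_le_rsqrt)
      qed
      finally show ?thesis .
    qed
    have "trace G = (\<Sum>a\<in>UNIV. G $ Inl a $ Inl a) + (\<Sum>a\<in>UNIV. G $ Inr a $ Inr a)"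
      by (simp add: trace_def sum_UNIV_plus)
    also have "(\<Sum>a\<in>UNIV. G $ Inl a $ Inl a) = 0" by (simp add: G_eq Gblk_def)
    also have "(\<Sum>a\<in>UNIV. G $ Inr a $ Inr a) \<le> (\<Sum>a\<in>(UNIV::'d set). sqrt LG2)"
      by (intro sum_mono diagG)
    finally have t1: "trace G \<le> real CARD('d) * sqrt LG2" by simp
    have "(\<Sum>i\<in>UNIV. Lam $ i $ i) = (\<Sum>a\<in>UNIV. Lam $ Inl a $ Inl a) + (\<Sum>a\<in>UNIV. Lam $ Inr a $ Inr a)"
      by (rule sum_UNIV_plus)
    also have "\<dots> \<ge> (\<Sum>a\<in>(UNIV::'d set). lmin) + (\<Sum>a\<in>(UNIV::'d set). lmin)"
      by (intro add_mono sum_mono lam_ge)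
    finally have t2: "2 * real CARD('d) * lmin \<le> trace G" unfolding trG by (simp add: mult_ac)
    have "2 * real CARD('d) * lmin \<le> real CARD('d) * sqrt LG2" using t1 t2 by linarith
    hence "2 * lmin \<le> sqrt LG2" by (simp add: mult.assoc mult.commute[of 2])
    hence "(2 * lmin)\<^sup>2 \<le> (sqrt LG2)\<^sup>2" using lmin_pos by (intro power_mono) auto
    thus ?thesis using LG0 by (simp add: power_mult_distrib)
  qed
  have LG2pos: "0 < LG2" using lmin_small lmin_pos by (smt (verit) zero_less_power)
  have kap1: "1 \<le> cond_num Q" by (rule cond_num_ge1[OF Q])
  have stp_pos: "0 < stp" unfolding stp_def using lmin_pos LG2pos kap1 by simp
  have B_pos: "0 < B"
  proof -
    have "0 < 4 / (stp * lmin)" using stp_pos lmin_pos by simp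
    hence "0 < real B" using B_large by linarith
    thus ?thesis by simp
  qed
  have HH': "HH = (\<Sum>t\<in>{1..n}. (norm (Gt t *v z_star - gt t))\<^sup>2) / real n"
    unfolding HH_def by (simp add: avg_def divide_inverse mult.commute)
  interpret L: scsg_loc n B Gt gt Q Lam z_star stp lmin LG2 HH
  proof
    show "0 < n" by (rule n_pos)
    show "0 < B" by (rule B_pos)
    show "B \<le> n" using B_lt_n by simp
    show "invertible Q" by (rule Q)
    show "diagonal_mat Lam" by (rule Lam)
    show "avg n Gt = Q ** Lam ** matrix_inv Q" using diag by (simp add: G_def)
    show "avg n Gt *v z_star = avg n gt" by (rule opt)
    show "lmin \<le> Lam $ i $ i" for i by (rule lam_ge)
    show "0 < lmin" by (rule lmin_pos)
    show "(\<Sum>t\<in>{1..n}. (norm (Gt t *v w))\<^sup>2) \<le> real n * LG2 * (norm w)\<^sup>2" for w by (rule LGb)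
    show "4 * lmin\<^sup>2 \<le> LG2" by (rule lmin_small)
    show "stp = lmin / (6 * (cond_num Q)\<^sup>2 * LG2)" by (rule stp_def)
    show "4 / (stp * lmin) \<le> real B" by (rule B_large)
    show "HH = (\<Sum>t\<in>{1..n}. (norm (Gt t *v z_star - gt t))\<^sup>2) / real n" by (rule HH')
  qed
  have ts: "theta_star = theta_part z_star" by (simp add: z_star_def theta_zvec)
  have "(\<integral>\<^sup>+ z. ennreal ((norm (theta_part z - theta_star))\<^sup>2) \<partial>measure_pmf (scsg n B Gt gt stp Z0 M))
      \<le> (\<integral>\<^sup>+ z. ennreal ((norm (z - z_star))\<^sup>2) \<partial>measure_pmf (scsg n B Gt gt stp Z0 M))"
    unfolding ts by (intro nn_integral_mono ennreal_leI theta_bound)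
  also have "\<dots> \<le> ennreal ((4 / (3 * real B * stp * lmin) + 1 / 3) ^ M * (cond_num Q)\<^sup>2)
        * (\<integral>\<^sup>+ z. ennreal ((norm (z - z_star))\<^sup>2) \<partial>measure_pmf Z0)
      + ennreal (3 * stp * (cond_num Q)\<^sup>2 * HH / (lmin * (real B * stp * lmin - 2)))"
    by (rule L.final_loc)
  finally show ?thesis .
qed

end
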